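(* Let $\mathcal{X}$ be a measurable space, let $k:\mathcal{X}\times\mathcal{X}\to\mathbb{R}$ be a measurable reproducing kernel with $|k(x,y)|\le 1$ for all $x,y$, let $\{\mathbb{P}_\theta:\theta\in\Theta\}$ be a family of Borel probability measures on $\mathcal{X}$, and let $\mathbb{P}^*_0$ be a Borel probability measure on $\mathcal{X}$ such that $\inf_{\theta\in\Theta}\mathrm{MMD}(\mathbb{P}_\theta,\mathbb{P}^*_0)=C$ for some $C>0$. Fix $\alpha>0$, an integer $T\ge1$ and a Borel probability measure $\mathbb{F}$ on $\mathcal{X}$. For each $n$, let $x_1,\dots,x_n$ be i.i.d. with law $\mathbb{P}^*_0$ and let $\nu_n$ be the approximate posterior defined in the context. Then for any sequence of positive reals $M_n\to+\infty$, \[ \nu_n\Big(\mathbb{P}:\ \mathrm{MMD}(\mathbb{P}_{\theta^*(\mathbb{P})},\mathbb{P}^*_0)>C+\frac{M_n}{n^{1/2}}\Big)\longrightarrow 0\quad (n\to\infty), \] where the convergence is in $L^1$, i.e. the expectation of the left-hand side with respect to $x_{1:n}\overset{\text{iid}}{\sim}\mathbb{P}^*_0$ tends to $0$.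
   Context: For a Borel probability measure $\mathbb{P}$ on $\mathcal{X}$, $\mu_{\mathbb{P}}=\int k(x,\cdot)\,\mathbb{P}(dx)$ in the RKHS $\mathcal{H}_k$ of $k$, and $\mathrm{MMD}(\mathbb{P},\mathbb{Q})=\|\mu_{\mathbb{P}}-\mu_{\mathbb{Q}}\|_{\mathcal{H}_k}$. $\theta^*(\mathbb{P})$ denotes a minimiser in $\arg\inf_{\theta\in\Theta}\mathrm{MMD}^2(\mathbb{P},\mathbb{P}_\theta)$ (assumed to exist and chosen measurably). Given data $x_{1:n}$, $\nu_n$ is the law of the random measure $\mathbb{P}=\sum_{i=1}^n w_i\delta_{x_i}+\sum_{k=1}^T\tilde w_k\delta_{\tilde x_k}$ with $\tilde x_{1:T}$ i.i.d. $\mathbb{F}$, independent of $(w_1,\dots,w_n,\tilde w_1,\dots,\tilde w_T)\sim\mathrm{Dirichlet}(1,\dots,1,\tfrac{\alpha}{T},\dots,\tfrac{\alpha}{T})$ ($n$ ones, $T$ copies of $\alpha/T$). Note that $\nu_n$ depends on the random data, so the left-hand side is a random variable. *)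

theory Defs
  imports "HOL-Probability.Probability"
begin

definition reproducing_kernel :: "'a measure \<Rightarrow> ('a \<Rightarrow> 'a \<Rightarrow> real) \<Rightarrow> bool" where
  "reproducing_kernel X k \<longleftrightarrow>
     (\<forall>x\<in>space X. \<forall>y\<in>space X. k x y = k y x) \<and>
     (\<forall>(m::nat) (xs::nat \<Rightarrow> 'a) (c::nat \<Rightarrow> real). (\<forall>i<m. xs i \<in> space X) \<longrightarrow>
        0 \<le> (\<Sum>i<m. \<Sum>j<m. c i * c j * k (xs i) (xs j)))"

(* <mu_P, mu_Q>_{H_k} = \<integral>\<integral> k(x,y) dQ(y) dP(x) *)
definition kernel_inner :: "('a \<Rightarrow> 'a \<Rightarrow> real) \<Rightarrow> 'a measure \<Rightarrow> 'a measure \<Rightarrow> real" where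
  "kernel_inner k P Q = (\<integral>x. (\<integral>y. k x y \<partial>Q) \<partial>P)"

(* MMD^2(P,Q) = || mu_P - mu_Q ||^2_{H_k}, expanded by the reproducing property *)
definition MMD2 :: "('a \<Rightarrow> 'a \<Rightarrow> real) \<Rightarrow> 'a measure \<Rightarrow> 'a measure \<Rightarrow> real" where
  "MMD2 k P Q = kernel_inner k P P - 2 * kernel_inner k P Q + kernel_inner k Q Q"

definition MMD :: "('a \<Rightarrow> 'a \<Rightarrow> real) \<Rightarrow> 'a measure \<Rightarrow> 'a measure \<Rightarrow> real" where
  "MMD k P Q = sqrt (MMD2 k P Q)"

definition gamma_density :: "real \<Rightarrow> real \<Rightarrow> ennreal" where
  "gamma_density a x = (if 0 < x then ennreal (x powr (a - 1) * exp (- x) / Gamma a) else 0)"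

definition dirichlet :: "nat \<Rightarrow> (nat \<Rightarrow> real) \<Rightarrow> (nat \<Rightarrow> real) measure" where
  "dirichlet m a =
     distr (PiM {..<m} (\<lambda>i. density lborel (gamma_density (a i))))
           (PiM {..<m} (\<lambda>_. borel))
           (\<lambda>g. \<lambda>i\<in>{..<m}. g i / (\<Sum>j<m. g j))"

definition post_weights_param :: "nat \<Rightarrow> nat \<Rightarrow> real \<Rightarrow> nat \<Rightarrow> real" where
  "post_weights_param n T \<alpha> i = (if i < n then 1 else \<alpha> / real T)"

definition random_measure :: "'a measure \<Rightarrow> nat \<Rightarrow> nat \<Rightarrow> (nat \<Rightarrow> 'a) \<Rightarrow> (nat \<Rightarrow> real) \<times> (nat \<Rightarrow> 'a) \<Rightarrow> 'a measure" where
  "random_measure X n T x wxt =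
     measure_of (space X) (sets X)
       (\<lambda>A. (\<Sum>i<n. ennreal (fst wxt i) * indicator A (x i))
          + (\<Sum>k<T. ennreal (fst wxt (n + k)) * indicator A (snd wxt k)))"

definition approx_posterior :: "'a measure \<Rightarrow> 'a measure \<Rightarrow> real \<Rightarrow> nat \<Rightarrow> nat \<Rightarrow> (nat \<Rightarrow> 'a) \<Rightarrow> 'a measure measure" where
  "approx_posterior X F \<alpha> T n x =
     distr (dirichlet (n + T) (post_weights_param n T \<alpha>) \<Otimes>\<^sub>M PiM {..<T} (\<lambda>_. F))
           (subprob_algebra X) (random_measure X n T x)"

end

theory Submission
  imports Defs
begin



lemma distr_PiM_pair:
  fixes M :: "'i \<Rightarrow> 'a measure"
  assumes M: "\<And>i. i \<in> I \<Longrightarrow> prob_space (M i)" and ab: "a \<in> I" "b \<in> I" "a \<noteq> b"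
  shows "distr (PiM I M) (M a \<Otimes>\<^sub>M M b) (\<lambda>\<omega>. (\<omega> a, \<omega> b)) = M a \<Otimes>\<^sub>M M b"
proof (rule pair_measure_eqI[symmetric])
  interpret A: prob_space "M a" using M ab by auto
  interpret B: prob_space "M b" using M ab by auto
  show "sigma_finite_measure (M a)" "sigma_finite_measure (M b)"
    by unfold_locales
  show "sets (M a \<Otimes>\<^sub>M M b) = sets (distr (PiM I M) (M a \<Otimes>\<^sub>M M b) (\<lambda>\<omega>. (\<omega> a, \<omega> b)))" by simp
  fix A B assume A: "A \<in> sets (M a)" and B: "B \<in> sets (M b)"
  have meas: "(\<lambda>\<omega>. (\<omega> a, \<omega> b)) \<in> measurable (PiM I M) (M a \<Otimes>\<^sub>M M b)"
    using ab by measurable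
  have "(\<lambda>\<omega>. (\<omega> a, \<omega> b)) -` (A \<times> B) \<inter> space (PiM I M) =
      prod_emb I M {a, b} (Pi\<^sub>E {a, b} (\<lambda>i. if i = a then A else B))"
    using ab by (auto simp: prod_emb_def space_PiM PiE_iff)
  then have "emeasure (distr (PiM I M) (M a \<Otimes>\<^sub>M M b) (\<lambda>\<omega>. (\<omega> a, \<omega> b))) (A \<times> B)
      = emeasure (PiM I M) (prod_emb I M {a, b} (Pi\<^sub>E {a, b} (\<lambda>i. if i = a then A else B)))"
    using A B meas by (simp add: emeasure_distr)
  also have "\<dots> = (\<Prod>i\<in>{a,b}. emeasure (M i) (if i = a then A else B))"
    using A B ab M by (intro emeasure_PiM_emb) auto
  also have "\<dots> = emeasure (M a) A * emeasure (M b) B"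
    using ab by simp
  finally show "emeasure (M a) A * emeasure (M b) B =
      emeasure (distr (PiM I M) (M a \<Otimes>\<^sub>M M b) (\<lambda>\<omega>. (\<omega> a, \<omega> b))) (A \<times> B)" by simp
qed

lemma PiM_pair_integral:
  fixes M :: "'i \<Rightarrow> 'a measure" and f :: "'a \<Rightarrow> 'a \<Rightarrow> real"
  assumes M: "\<And>i. i \<in> I \<Longrightarrow> prob_space (M i)" and ab: "a \<in> I" "b \<in> I" "a \<noteq> b"
    and f: "(\<lambda>(u, v). f u v) \<in> borel_measurable (M a \<Otimes>\<^sub>M M b)"
    and bnd: "\<And>u v. u \<in> space (M a) \<Longrightarrow> v \<in> space (M b) \<Longrightarrow> \<bar>f u v\<bar> \<le> B"
  shows "(\<integral>\<omega>. f (\<omega> a) (\<omega> b) \<partial>PiM I M) = (\<integral>u. (\<integral>v. f u v \<partial>M b) \<partial>M a)"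
proof -
  interpret A: prob_space "M a" using M ab by auto
  interpret B: prob_space "M b" using M ab by auto
  interpret AB: pair_prob_space "M a" "M b" by unfold_locales
  have meas: "(\<lambda>\<omega>. (\<omega> a, \<omega> b)) \<in> measurable (PiM I M) (M a \<Otimes>\<^sub>M M b)"
    using ab by measurable
  have "(\<integral>\<omega>. f (\<omega> a) (\<omega> b) \<partial>PiM I M) = (\<integral>\<omega>. (\<lambda>(u, v). f u v) ((\<lambda>\<omega>. (\<omega> a, \<omega> b)) \<omega>) \<partial>PiM I M)"
    by simp
  also have "\<dots> = (\<integral>z. (\<lambda>(u, v). f u v) z \<partial>distr (PiM I M) (M a \<Otimes>\<^sub>M M b) (\<lambda>\<omega>. (\<omega> a, \<omega> b)))"
    using meas f by (rule integral_distr[symmetric])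
  also have "\<dots> = (\<integral>z. (\<lambda>(u, v). f u v) z \<partial>(M a \<Otimes>\<^sub>M M b))"
    using distr_PiM_pair[of I M a b, OF M ab] by simp
  also have "\<dots> = (\<integral>u. (\<integral>v. f u v \<partial>M b) \<partial>M a)"
  proof (rule AB.integral_fst[symmetric])
    show "integrable (M a \<Otimes>\<^sub>M M b) (\<lambda>(u, v). f u v)"
      using f bnd by (intro AB.P.integrable_const_bound[where B=B]) (auto simp: space_pair_measure)
  qed
  finally show ?thesis .
qed

lemma PiM_single_integral:
  fixes M :: "'i \<Rightarrow> 'a measure" and f :: "'a \<Rightarrow> real"
  assumes M: "\<And>i. i \<in> I \<Longrightarrow> prob_space (M i)" and a: "a \<in> I"
    and f: "f \<in> borel_measurable (M a)"
  shows "(\<integral>\<omega>. f (\<omega> a) \<partial>PiM I M) = (\<integral>u. f u \<partial>M a)"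
proof -
  have meas: "(\<lambda>\<omega>. \<omega> a) \<in> measurable (PiM I M) (M a)"
    using a by measurable
  have "(\<integral>\<omega>. f (\<omega> a) \<partial>PiM I M) = (\<integral>u. f u \<partial>distr (PiM I M) (M a) (\<lambda>\<omega>. \<omega> a))"
    using meas f by (rule integral_distr[symmetric])
  also have "\<dots> = (\<integral>u. f u \<partial>M a)"
    using distr_PiM_component[of I M a, OF M a] by simp
  finally show ?thesis .
qed

lemma sum_times_snd: "(\<Sum>p\<in>{..<m} \<times> B. f (snd p)) = real m * (\<Sum>b\<in>B. (f b :: real))"
  by (simp add: sum.cartesian_product' sum_constant)

lemma prob_integral_abs_le:
  fixes f :: "'b \<Rightarrow> real"
  assumes N: "prob_space N" and bnd: "\<And>x. x \<in> space N \<Longrightarrow> \<bar>f x\<bar> \<le> B"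
  shows "\<bar>\<integral>x. f x \<partial>N\<bar> \<le> B"
proof -
  interpret prob_space N by fact
  obtain x0 where "x0 \<in> space N" using not_empty by blast
  then have B0: "0 \<le> B" using bnd[of x0] by linarith
  show ?thesis
  proof (cases "integrable N f")
    case True
    have "\<bar>\<integral>x. f x \<partial>N\<bar> \<le> (\<integral>x. \<bar>f x\<bar> \<partial>N)"
      using integral_norm_bound[of N f] by simp
    also have "\<dots> \<le> (\<integral>x. B \<partial>N)"
      using True bnd by (intro integral_mono) auto
    also have "\<dots> = B" by (simp add: prob_space)
    finally show ?thesis .
  next
    case False
    then show ?thesis using B0 by (simp add: not_integrable_integral_eq)
  qed
qed

lemma psd_finite_index:
  assumes kernel: "reproducing_kernel X k" and L: "finite L"
    and y: "\<And>p. p \<in> L \<Longrightarrow> y p \<in> space X"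
  shows "0 \<le> (\<Sum>p\<in>L. \<Sum>q\<in>L. d p * d q * k (y p) (y q))"
proof -
  obtain h where h: "bij_betw h {0..<card L} L" using ex_bij_betw_nat_finite[OF L] by blast
  have hs: "\<And>i. i < card L \<Longrightarrow> h i \<in> L" using h by (auto simp: bij_betw_def)
  have "0 \<le> (\<Sum>i<card L. \<Sum>j<card L. (d \<circ> h) i * (d \<circ> h) j * k ((y \<circ> h) i) ((y \<circ> h) j))"
    using kernel hs y unfolding reproducing_kernel_def by auto
  also have "\<dots> = (\<Sum>i\<in>{0..<card L}. \<Sum>j\<in>{0..<card L}. d (h i) * d (h j) * k (y (h i)) (y (h j)))"
    by (simp add: lessThan_atLeast0)
  also have "\<dots> = (\<Sum>i\<in>{0..<card L}. \<Sum>q\<in>L. d (h i) * d q * k (y (h i)) (y q))"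
    by (rule sum.cong[OF refl], rule sum.reindex_bij_betw[OF h])
  also have "\<dots> = (\<Sum>p\<in>L. \<Sum>q\<in>L. d p * d q * k (y p) (y q))"
    by (rule sum.reindex_bij_betw[OF h])
  finally show ?thesis .
qed

lemma cs_real:
  fixes a b h :: real
  assumes q: "\<And>s t. 0 \<le> s * s * a + 2 * s * t * h + t * t * b"
  shows "sqrt (a + 2*h + b) \<le> sqrt a + sqrt b"
proof -
  have a: "0 \<le> a" using q[of 1 0] by simp
  have b: "0 \<le> b" using q[of 0 1] by simp
  have hh: "h * h \<le> a * b"
  proof (cases "b = 0")
    case True
    show ?thesis
    proof (rule ccontr)
      assume "\<not> ?thesis"
      then have "h \<noteq> 0" using True by (cases "h = 0") auto
      then have "0 < h * h" by (simp add: not_square_less_zero less_le)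
      have "0 \<le> 1 * 1 * a + 2 * 1 * (-(a+1)/h) * h + (-(a+1)/h) * (-(a+1)/h) * b" by (rule q)
      then have "0 \<le> a - 2 * (a + 1)" using True \<open>h \<noteq> 0\<close> by simp
      then show False using \<open>h \<noteq> 0\<close> a by (simp add: field_simps)
    qed
  next
    case False
    then have bp: "0 < b" using b by simp
    have "0 \<le> b * b * a + 2 * b * (-h) * h + (-h) * (-h) * b" using q[of b "-h"] .
    then have "0 \<le> b * (a*b - h*h)" by (simp add: algebra_simps)
    then show ?thesis using bp by (simp add: zero_le_mult_iff)
  qed
  have "h \<le> sqrt a * sqrt b"
  proof -
    have "\<bar>h\<bar> = sqrt (h*h)" by simp
    also have "\<dots> \<le> sqrt (a*b)" using hh by (rule real_sqrt_le_mono)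
    finally show ?thesis by (simp add: real_sqrt_mult)
  qed
  then have "a + 2*h + b \<le> (sqrt a + sqrt b)^2"
    using a b by (simp add: power2_eq_square algebra_simps)
  then have "sqrt (a + 2*h + b) \<le> sqrt ((sqrt a + sqrt b)^2)" by (rule real_sqrt_le_mono)
  then show ?thesis using a b by simp
qed

context
  fixes X :: "'a measure" and k :: "'a \<Rightarrow> 'a \<Rightarrow> real"
  assumes kernel: "reproducing_kernel X k"
    and k_meas: "(\<lambda>(x, y). k x y) \<in> borel_measurable (X \<Otimes>\<^sub>M X)"
    and k_bdd: "\<forall>x\<in>space X. \<forall>y\<in>space X. \<bar>k x y\<bar> \<le> 1"
begin

lemma k_meas': "sets A = sets X \<Longrightarrow> sets B = sets X \<Longrightarrow> (\<lambda>(x, y). k x y) \<in> borel_measurable (A \<Otimes>\<^sub>M B)"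
  using k_meas by (subst measurable_cong_sets[OF sets_pair_measure_cong refl]) auto

lemma kernel_inner_bound:
  assumes P: "prob_space P" "sets P = sets X" and Q: "prob_space Q" "sets Q = sets X"
  shows "\<bar>kernel_inner k P Q\<bar> \<le> 1"
  unfolding kernel_inner_def
proof (rule prob_integral_abs_le[OF P(1)])
  fix x assume "x \<in> space P"
  then have x: "x \<in> space X" using sets_eq_imp_space_eq[OF P(2)] by simp
  show "\<bar>\<integral>y. k x y \<partial>Q\<bar> \<le> 1"
    using k_bdd x sets_eq_imp_space_eq[OF Q(2)] by (intro prob_integral_abs_le[OF Q(1)]) auto
qed

lemma kernel_inner_sym:
  assumes P: "prob_space P" "sets P = sets X" and Q: "prob_space Q" "sets Q = sets X"
  shows "kernel_inner k P Q = kernel_inner k Q P"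
proof -
  interpret P: prob_space P by fact
  interpret Q: prob_space Q by fact
  interpret PQ: pair_prob_space P Q by unfold_locales
  have sp: "space P = space X" "space Q = space X"
    using sets_eq_imp_space_eq P(2) Q(2) by auto
  have int: "integrable (P \<Otimes>\<^sub>M Q) (\<lambda>(x, y). k x y)"
    using k_meas'[OF P(2) Q(2)] k_bdd sp
    by (intro PQ.P.integrable_const_bound[where B=1]) (auto simp: space_pair_measure)
  have "kernel_inner k P Q = (\<integral>x. \<integral>y. k x y \<partial>Q \<partial>P)" by (simp add: kernel_inner_def)
  also have "\<dots> = (\<integral>y. \<integral>x. k x y \<partial>P \<partial>Q)"
    using PQ.Fubini_integral[OF int] by simp
  also have "\<dots> = (\<integral>y. \<integral>x. k y x \<partial>P \<partial>Q)"
    using kernel sp unfolding reproducing_kernel_def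
    by (intro Bochner_Integration.integral_cong refl) auto
  also have "\<dots> = kernel_inner k Q P" by (simp add: kernel_inner_def)
  finally show ?thesis .
qed

lemma kernel_psd_measures:
  fixes J :: "'j set" and P :: "'j \<Rightarrow> 'a measure" and c :: "'j \<Rightarrow> real"
  assumes J: "finite J" and P: "\<And>j. j \<in> J \<Longrightarrow> prob_space (P j) \<and> sets (P j) = sets X"
  shows "0 \<le> (\<Sum>i\<in>J. \<Sum>j\<in>J. c i * c j * kernel_inner k (P i) (P j))"
proof -
  define Q where "Q = (\<Sum>i\<in>J. \<Sum>j\<in>J. c i * c j * kernel_inner k (P i) (P j))"
  define S where "S = (\<Sum>j\<in>J. (c j)\<^sup>2)"
  have main: "0 \<le> real m * real m * Q + 2 * real m * S" for m :: nat
  proof -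
    define L where "L = {..<m} \<times> J"
    define MM where "MM = (\<lambda>p::nat \<times> 'j. P (snd p))"
    define \<Omega> where "\<Omega> = PiM L MM"
    have L: "finite L" using J by (simp add: L_def)
    have MMp: "\<And>p. p \<in> L \<Longrightarrow> prob_space (MM p)" and MMs: "\<And>p. p \<in> L \<Longrightarrow> sets (MM p) = sets X"
      using P by (auto simp: MM_def L_def)
    have MMsp: "\<And>p. p \<in> L \<Longrightarrow> space (MM p) = space X"
      using MMs sets_eq_imp_space_eq by blast
    interpret \<Omega>: prob_space \<Omega> unfolding \<Omega>_def using MMp by (intro prob_space_PiM) auto
    have sp: "\<And>\<omega> p. \<omega> \<in> space \<Omega> \<Longrightarrow> p \<in> L \<Longrightarrow> \<omega> p \<in> space X"
      using MMsp by (auto simp: \<Omega>_def space_PiM PiE_iff)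
    have meask: "(\<lambda>\<omega>. k (\<omega> p) (\<omega> q)) \<in> borel_measurable \<Omega>" if "p \<in> L" "q \<in> L" for p q
    proof -
      have "(\<lambda>\<omega>. (\<omega> p, \<omega> q)) \<in> measurable \<Omega> (MM p \<Otimes>\<^sub>M MM q)"
        unfolding \<Omega>_def using that by measurable
      from measurable_compose[OF this k_meas'[OF MMs[OF that(1)] MMs[OF that(2)]]]
      show ?thesis by simp
    qed
    have intk: "integrable \<Omega> (\<lambda>\<omega>. k (\<omega> p) (\<omega> q))" if "p \<in> L" "q \<in> L" for p q
      using meask[OF that] k_bdd sp that by (intro \<Omega>.integrable_const_bound[where B=1]) auto
    define E where "E = (\<lambda>p. \<integral>\<omega>. k (\<omega> p) (\<omega> p) \<partial>\<Omega>)"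
    define G where "G = (\<lambda>i j. kernel_inner k (P i) (P j))"
    have off: "(\<integral>\<omega>. k (\<omega> p) (\<omega> q) \<partial>\<Omega>) = G (snd p) (snd q)" if "p \<in> L" "q \<in> L" "p \<noteq> q" for p q
    proof -
      have "(\<integral>\<omega>. k (\<omega> p) (\<omega> q) \<partial>\<Omega>) = (\<integral>u. (\<integral>v. k u v \<partial>MM q) \<partial>MM p)"
        unfolding \<Omega>_def
        using that MMp k_meas'[OF MMs[OF that(1)] MMs[OF that(2)]] k_bdd MMsp
        by (intro PiM_pair_integral[where B=1]) auto
      then show ?thesis by (simp add: G_def kernel_inner_def MM_def)
    qed
    have Ebd: "\<bar>E p\<bar> \<le> 1" if "p \<in> L" for p
      unfolding E_def using k_bdd sp that by (intro prob_integral_abs_le) (auto simp: \<Omega>.prob_space_axioms)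
    have Gbd: "\<bar>G i j\<bar> \<le> 1" if "i \<in> J" "j \<in> J" for i j
      unfolding G_def using P that by (intro kernel_inner_bound) auto
    have "0 \<le> (\<integral>\<omega>. (\<Sum>p\<in>L. \<Sum>q\<in>L. c (snd p) * c (snd q) * k (\<omega> p) (\<omega> q)) \<partial>\<Omega>)"
    proof (rule Bochner_Integration.integral_nonneg)
      fix \<omega> assume "\<omega> \<in> space \<Omega>"
      then show "0 \<le> (\<Sum>p\<in>L. \<Sum>q\<in>L. c (snd p) * c (snd q) * k (\<omega> p) (\<omega> q))"
        using psd_finite_index[OF kernel L, of \<omega> "\<lambda>p. c (snd p)"] sp by simp
    qed
    also have "\<dots> = (\<Sum>p\<in>L. \<Sum>q\<in>L. c (snd p) * c (snd q) * (\<integral>\<omega>. k (\<omega> p) (\<omega> q) \<partial>\<Omega>))"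
      using intk by (simp add: Bochner_Integration.integral_sum integrable_sum)
    also have "\<dots> = (\<Sum>p\<in>L. \<Sum>q\<in>L. c (snd p) * c (snd q) * G (snd p) (snd q)
        + (if p = q then (c (snd p))\<^sup>2 * (E p - G (snd p) (snd p)) else 0))"
      using off by (intro sum.cong refl) (auto simp: E_def power2_eq_square algebra_simps)
    also have "\<dots> = (\<Sum>p\<in>L. \<Sum>q\<in>L. c (snd p) * c (snd q) * G (snd p) (snd q))
        + (\<Sum>p\<in>L. (c (snd p))\<^sup>2 * (E p - G (snd p) (snd p)))"
      using L by (simp add: sum.distrib)
    also have "(\<Sum>p\<in>L. \<Sum>q\<in>L. c (snd p) * c (snd q) * G (snd p) (snd q)) = real m * real m * Q"
    proof -
      have inner: "(\<Sum>q\<in>L. c (snd p) * c (snd q) * G (snd p) (snd q)) = real m * (\<Sum>j\<in>J. c (snd p) * c j * G (snd p) j)" for p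
        unfolding L_def by (rule sum_times_snd)
      have "(\<Sum>p\<in>L. real m * (\<Sum>j\<in>J. c (snd p) * c j * G (snd p) j)) = real m * (\<Sum>i\<in>J. real m * (\<Sum>j\<in>J. c i * c j * G i j))"
        unfolding L_def by (rule sum_times_snd)
      moreover have "(\<Sum>p\<in>L. \<Sum>q\<in>L. c (snd p) * c (snd q) * G (snd p) (snd q)) = (\<Sum>p\<in>L. real m * (\<Sum>j\<in>J. c (snd p) * c j * G (snd p) j))"
        by (rule sum.cong[OF refl inner])
      ultimately show ?thesis unfolding Q_def G_def by (simp add: sum_distrib_left mult.assoc)
    qed
    also have "(\<Sum>p\<in>L. (c (snd p))\<^sup>2 * (E p - G (snd p) (snd p))) \<le> (\<Sum>p\<in>L. (c (snd p))\<^sup>2 * 2)"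
    proof (intro sum_mono mult_left_mono)
      fix p assume p: "p \<in> L"
      then have "snd p \<in> J" by (auto simp: L_def)
      with Ebd[OF p] Gbd[of "snd p" "snd p"] show "E p - G (snd p) (snd p) \<le> 2" by linarith
    qed simp
    also have "(\<Sum>p\<in>L. (c (snd p))\<^sup>2 * 2) = 2 * real m * S"
    proof -
      have "(\<Sum>p\<in>L. (c (snd p))\<^sup>2 * 2) = real m * (\<Sum>j\<in>J. (c j)\<^sup>2 * 2)"
        unfolding L_def by (rule sum_times_snd)
      then show ?thesis unfolding S_def by (simp add: sum_distrib_right[symmetric])
    qed
    finally show ?thesis by simp
  qed
  show ?thesis
  proof (rule ccontr)
    assume "\<not> ?thesis"
    then have Qn: "Q < 0" by (simp add: Q_def)
    have S0: "0 \<le> S" unfolding S_def by (intro sum_nonneg) auto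
    obtain m :: nat where m: "2 * S / (- Q) < real m" using reals_Archimedean2 by blast
    then have mpos: "0 < real m" using S0 Qn by (smt (verit) divide_nonneg_pos)
    from m Qn have "2 * S < real m * (- Q)" by (simp add: field_simps)
    then have "real m * (real m * Q + 2 * S) < 0" using mpos
      by (smt (verit) mult_pos_pos mult_minus_right distrib_left)
    moreover have "0 \<le> real m * (real m * Q + 2 * S)" using main[of m] by (simp add: algebra_simps)
    ultimately show False by simp
  qed
qed

lemma MMD2_nonneg:
  assumes P: "prob_space P" "sets P = sets X" and Q: "prob_space Q" "sets Q = sets X"
  shows "0 \<le> MMD2 k P Q"
proof -
  define PP where "PP = (\<lambda>i::nat. if i = 0 then P else Q)"
  define c where "c = (\<lambda>i::nat. if i = 0 then 1 else - 1 :: real)"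
  have "0 \<le> (\<Sum>i\<in>{0,1}. \<Sum>j\<in>{0,1}. c i * c j * kernel_inner k (PP i) (PP j))"
    using P Q by (intro kernel_psd_measures) (auto simp: PP_def)
  also have "\<dots> = MMD2 k P Q"
    using kernel_inner_sym[OF P Q] by (simp add: PP_def c_def MMD2_def)
  finally show ?thesis .
qed

lemma MMD_triangle:
  assumes A: "prob_space A" "sets A = sets X" and B: "prob_space B" "sets B = sets X"
    and D: "prob_space D" "sets D = sets X"
  shows "MMD k A B \<le> MMD k A D + MMD k D B"
proof -
  define h where "h = kernel_inner k A D - kernel_inner k A B - kernel_inner k D D + kernel_inner k D B"
  have q: "0 \<le> s * s * MMD2 k A D + 2 * s * t * h + t * t * MMD2 k D B" for s t
  proof -
    define PP where "PP = (\<lambda>i::nat. if i = 0 then A else if i = 1 then D else B)"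
    define c where "c = (\<lambda>i::nat. if i = 0 then s else if i = 1 then t - s else - t)"
    have "0 \<le> (\<Sum>i\<in>{0,1,2}. \<Sum>j\<in>{0,1,2}. c i * c j * kernel_inner k (PP i) (PP j))"
      using A B D by (intro kernel_psd_measures) (auto simp: PP_def)
    also have "\<dots> = s * s * MMD2 k A D + 2 * s * t * h + t * t * MMD2 k D B"
      using kernel_inner_sym[OF A D] kernel_inner_sym[OF A B] kernel_inner_sym[OF D B]
      by (simp add: PP_def c_def MMD2_def h_def algebra_simps)
    finally show ?thesis .
  qed
  have "MMD2 k A B = MMD2 k A D + 2 * h + MMD2 k D B"
    by (simp add: MMD2_def h_def)
  then show ?thesis
    using cs_real[of "MMD2 k A D" h "MMD2 k D B", OF q] by (simp add: MMD_def)
qed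

lemma MMD_sym:
  assumes P: "prob_space P" "sets P = sets X" and Q: "prob_space Q" "sets Q = sets X"
  shows "MMD k P Q = MMD k Q P"
  using kernel_inner_sym[OF P Q] by (simp add: MMD_def MMD2_def)

end

lemma thetastar_bound:
  fixes X :: "'a measure" and k :: "'a \<Rightarrow> 'a \<Rightarrow> real"
    and \<Theta> :: "'p set" and P\<theta> :: "'p \<Rightarrow> 'a measure"
    and P0 :: "'a measure" and C :: real
    and thetastar :: "'a measure \<Rightarrow> 'p"
  assumes kernel: "reproducing_kernel X k"
    and k_meas: "(\<lambda>(x, y). k x y) \<in> borel_measurable (X \<Otimes>\<^sub>M X)"
    and k_bdd: "\<forall>x\<in>space X. \<forall>y\<in>space X. \<bar>k x y\<bar> \<le> 1"
    and P\<theta>_prob: "\<forall>\<theta>\<in>\<Theta>. prob_space (P\<theta> \<theta>) \<and> sets (P\<theta> \<theta>) = sets X"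
    and P0_prob: "prob_space P0" "sets P0 = sets X"
    and C_def: "(INF \<theta>\<in>\<Theta>. MMD k (P\<theta> \<theta>) P0) = C"
    and thetastar_min: "\<forall>P. prob_space P \<and> sets P = sets X \<longrightarrow>
          thetastar P \<in> \<Theta> \<and> (\<forall>\<theta>\<in>\<Theta>. MMD2 k P (P\<theta> (thetastar P)) \<le> MMD2 k P (P\<theta> \<theta>))"
    and P: "prob_space P" "sets P = sets X"
  shows "MMD k (P\<theta> (thetastar P)) P0 \<le> C + 2 * MMD k P P0"
proof -
  note tri = MMD_triangle[OF kernel k_meas k_bdd]
  note sym = MMD_sym[OF kernel k_meas k_bdd]
  have ts: "thetastar P \<in> \<Theta>" and mn: "\<And>\<theta>. \<theta> \<in> \<Theta> \<Longrightarrow> MMD2 k P (P\<theta> (thetastar P)) \<le> MMD2 k P (P\<theta> \<theta>)"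
    using thetastar_min P by auto
  have Ps: "prob_space (P\<theta> (thetastar P))" "sets (P\<theta> (thetastar P)) = sets X"
    using P\<theta>_prob ts by auto
  have "MMD k (P\<theta> (thetastar P)) P0 - 2 * MMD k P P0 \<le> (INF \<theta>\<in>\<Theta>. MMD k (P\<theta> \<theta>) P0)"
  proof (rule cINF_greatest)
    show "\<Theta> \<noteq> {}" using ts by auto
    fix \<theta> assume th: "\<theta> \<in> \<Theta>"
    have Pt: "prob_space (P\<theta> \<theta>)" "sets (P\<theta> \<theta>) = sets X" using P\<theta>_prob th by auto
    have "MMD k (P\<theta> (thetastar P)) P0 \<le> MMD k (P\<theta> (thetastar P)) P + MMD k P P0"
      by (rule tri[OF Ps P0_prob P])
    also have "MMD k (P\<theta> (thetastar P)) P = MMD k P (P\<theta> (thetastar P))"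
      by (rule sym[OF Ps P])
    also have "\<dots> \<le> MMD k P (P\<theta> \<theta>)"
      unfolding MMD_def using mn[OF th] by (rule real_sqrt_le_mono)
    also have "\<dots> \<le> MMD k P P0 + MMD k P0 (P\<theta> \<theta>)"
      by (rule tri[OF P Pt P0_prob])
    also have "MMD k P0 (P\<theta> \<theta>) = MMD k (P\<theta> \<theta>) P0"
      by (rule sym[OF P0_prob Pt])
    finally show "MMD k (P\<theta> (thetastar P)) P0 - 2 * MMD k P P0 \<le> MMD k (P\<theta> \<theta>) P0" by simp
  qed
  then show ?thesis using C_def by simp
qed




definition ymap :: "nat \<Rightarrow> (nat \<Rightarrow> 'a) \<Rightarrow> (nat \<Rightarrow> 'a) \<Rightarrow> nat \<Rightarrow> 'a" where
  "ymap n x xt a = (if a < n then x a else xt (a - n))"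

definition rmeas :: "'a measure \<Rightarrow> nat \<Rightarrow> (nat \<Rightarrow> real) \<Rightarrow> (nat \<Rightarrow> 'a) \<Rightarrow> 'a measure" where
  "rmeas X N w y = distr (point_measure {..<N} (\<lambda>a. ennreal (w a))) X y"

lemma sum_split_nT: "(\<Sum>a<n+T. g a) = (\<Sum>a<n. g a) + (\<Sum>k<T. g (n + k))" for g :: "nat \<Rightarrow> 'b::comm_monoid_add"
  by (induct T) (simp_all add: add.assoc)

lemma rmeas_sets: "sets (rmeas X N w y) = sets X" "space (rmeas X N w y) = space X"
  by (simp_all add: rmeas_def)

lemma rmeas_y_meas:
  assumes "\<And>a. a < N \<Longrightarrow> y a \<in> space X"
  shows "y \<in> measurable (point_measure {..<N} (\<lambda>a. ennreal (w a))) X"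
  using assms unfolding point_measure_def
  by (subst measurable_cong_sets[OF sets_density refl]) (auto simp: measurable_count_space_eq1)

lemma random_measure_eq:
  assumes x: "\<And>i. i < n \<Longrightarrow> x i \<in> space X" and xt: "\<And>i. i < T \<Longrightarrow> xt i \<in> space X"
  shows "random_measure X n T x (w, xt) = rmeas X (n + T) w (ymap n x xt)"
proof -
  let ?N = "rmeas X (n + T) w (ymap n x xt)"
  have ym: "\<And>a. a < n + T \<Longrightarrow> ymap n x xt a \<in> space X"
    using x xt by (auto simp: ymap_def)
  have "?N = measure_of (space ?N) (sets ?N) (emeasure ?N)" by (rule measure_of_of_measure[symmetric])
  also have "\<dots> = measure_of (space X) (sets X) (emeasure ?N)" by (simp add: rmeas_sets)
  also have "\<dots> = random_measure X n T x (w, xt)"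
    unfolding random_measure_def
  proof (rule measure_of_eq)
    show "sets X \<subseteq> Pow (space X)" using sets.space_closed by auto
    fix A assume "A \<in> sigma_sets (space X) (sets X)"
    then have A: "A \<in> sets X" by (simp add: sets.sigma_sets_eq)
    have "emeasure ?N A = emeasure (point_measure {..<n+T} (\<lambda>a. ennreal (w a))) (ymap n x xt -` A \<inter> {..<n+T})"
      unfolding rmeas_def using A rmeas_y_meas[where N="n+T" and y="ymap n x xt" and X=X and w=w, OF ym]
      by (subst emeasure_distr) (auto simp: space_point_measure)
    also have "\<dots> = (\<Sum>a\<in>ymap n x xt -` A \<inter> {..<n+T}. ennreal (w a))"
      by (rule emeasure_point_measure_finite) auto
    also have "\<dots> = (\<Sum>a<n+T. ennreal (w a) * indicator A (ymap n x xt a))"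
      by (rule sum.mono_neutral_cong_left) (auto simp: indicator_def)
    also have "\<dots> = (\<Sum>a<n. ennreal (w a) * indicator A (ymap n x xt a)) + (\<Sum>k<T. ennreal (w (n + k)) * indicator A (ymap n x xt (n + k)))"
      by (rule sum_split_nT)
    also have "\<dots> = (\<Sum>i<n. ennreal (fst (w, xt) i) * indicator A (x i)) + (\<Sum>k<T. ennreal (fst (w, xt) (n + k)) * indicator A (snd (w, xt) k))"
      by (simp add: ymap_def)
    finally show "emeasure ?N A = (\<Sum>i<n. ennreal (fst (w, xt) i) * indicator A (x i)) + (\<Sum>k<T. ennreal (fst (w, xt) (n + k)) * indicator A (snd (w, xt) k))" .
  qed
  finally show ?thesis by simp
qed

lemma integral_rmeas:
  fixes f :: "'a \<Rightarrow> real"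
  assumes y: "\<And>a. a < N \<Longrightarrow> y a \<in> space X" and w: "\<And>a. a < N \<Longrightarrow> 0 \<le> w a"
    and f: "f \<in> borel_measurable X"
  shows "(\<integral>u. f u \<partial>rmeas X N w y) = (\<Sum>a<N. w a * f (y a))"
proof -
  have "(\<integral>u. f u \<partial>rmeas X N w y) = (\<integral>a. f (y a) \<partial>point_measure {..<N} (\<lambda>a. ennreal (w a)))"
    unfolding rmeas_def using rmeas_y_meas[where N=N and y=y and X=X and w=w, OF y] f by (rule integral_distr)
  also have "\<dots> = (\<integral>a. w a * f (y a) \<partial>count_space {..<N})"
    unfolding point_measure_def using w
    by (subst integral_density) (auto simp: measurable_count_space_eq1 AE_count_space)
  also have "\<dots> = (\<Sum>a<N. w a * f (y a))"
    by (simp add: lebesgue_integral_count_space_finite)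
  finally show ?thesis .
qed

lemma prob_space_rmeas:
  assumes y: "\<And>a. a < N \<Longrightarrow> y a \<in> space X" and w: "\<And>a. a < N \<Longrightarrow> 0 \<le> w a"
    and s: "(\<Sum>a<N. w a) = 1"
  shows "prob_space (rmeas X N w y)"
proof (rule prob_spaceI)
  have "emeasure (rmeas X N w y) (space (rmeas X N w y)) = emeasure (point_measure {..<N} (\<lambda>a. ennreal (w a))) (y -` space X \<inter> {..<N})"
    unfolding rmeas_def using rmeas_y_meas[where N=N and y=y and X=X and w=w, OF y]
    by (subst emeasure_distr) (auto simp: space_point_measure)
  also have "y -` space X \<inter> {..<N} = {..<N}" using y by auto
  also have "emeasure (point_measure {..<N} (\<lambda>a. ennreal (w a))) {..<N} = (\<Sum>a<N. ennreal (w a))"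
    by (rule emeasure_point_measure_finite) auto
  also have "\<dots> = ennreal (\<Sum>a<N. w a)" using w by (intro sum_ennreal) auto
  finally show "emeasure (rmeas X N w y) (space (rmeas X N w y)) = 1" using s by simp
qed

definition mP :: "('a \<Rightarrow> 'a \<Rightarrow> real) \<Rightarrow> 'a measure \<Rightarrow> 'a \<Rightarrow> real" where
  "mP k P0 u = (\<integral>v. k u v \<partial>P0)"

definition Khat :: "('a \<Rightarrow> 'a \<Rightarrow> real) \<Rightarrow> 'a measure \<Rightarrow> 'a \<Rightarrow> 'a \<Rightarrow> real" where
  "Khat k P0 u v = k u v - mP k P0 u - mP k P0 v + kernel_inner k P0 P0"

definition Dq :: "('a \<Rightarrow> 'a \<Rightarrow> real) \<Rightarrow> 'a measure \<Rightarrow> nat \<Rightarrow> (nat \<Rightarrow> real) \<Rightarrow> (nat \<Rightarrow> 'a) \<Rightarrow> real" where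
  "Dq k P0 N w y = (\<Sum>a<N. \<Sum>b<N. w a * w b * Khat k P0 (y a) (y b))"

context
  fixes X :: "'a measure" and k :: "'a \<Rightarrow> 'a \<Rightarrow> real" and P0 :: "'a measure"
  assumes kernel: "reproducing_kernel X k"
    and k_meas: "(\<lambda>(x, y). k x y) \<in> borel_measurable (X \<Otimes>\<^sub>M X)"
    and k_bdd: "\<forall>x\<in>space X. \<forall>y\<in>space X. \<bar>k x y\<bar> \<le> 1"
    and P0_prob: "prob_space P0" "sets P0 = sets X"
begin

lemma k_meas2: "sets A = sets X \<Longrightarrow> sets B = sets X \<Longrightarrow> (\<lambda>(x, y). k x y) \<in> borel_measurable (A \<Otimes>\<^sub>M B)"
  using k_meas by (subst measurable_cong_sets[OF sets_pair_measure_cong refl]) auto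

lemma spP0: "space P0 = space X" using sets_eq_imp_space_eq[OF P0_prob(2)] .

lemma mP_meas: "mP k P0 \<in> borel_measurable X"
proof -
  interpret P0: prob_space P0 by (rule P0_prob)
  have "(\<lambda>(x, y). k x y) \<in> borel_measurable (X \<Otimes>\<^sub>M P0)" using k_meas2[OF refl P0_prob(2)] .
  then have "(\<lambda>u. \<integral>v. k u v \<partial>P0) \<in> borel_measurable X"
    by (rule P0.borel_measurable_lebesgue_integral)
  then show ?thesis by (simp add: mP_def[abs_def])
qed

lemma k_sec_meas: "u \<in> space X \<Longrightarrow> k u \<in> borel_measurable X"
  using measurable_Pair2[OF k_meas] by simp

lemma mP_bdd: "u \<in> space X \<Longrightarrow> \<bar>mP k P0 u\<bar> \<le> 1"
  unfolding mP_def using k_bdd spP0 by (intro prob_integral_abs_le[OF P0_prob(1)]) auto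

lemma kap_eq: "kernel_inner k P0 P0 = (\<integral>u. mP k P0 u \<partial>P0)"
  by (simp add: kernel_inner_def mP_def)

lemma kap_bdd: "\<bar>kernel_inner k P0 P0\<bar> \<le> 1"
  unfolding kap_eq using mP_bdd spP0 by (intro prob_integral_abs_le[OF P0_prob(1)]) auto

lemma Khat_bdd: "u \<in> space X \<Longrightarrow> v \<in> space X \<Longrightarrow> \<bar>Khat k P0 u v\<bar> \<le> 4"
  using k_bdd mP_bdd[of u] mP_bdd[of v] kap_bdd unfolding Khat_def by fastforce

lemma Khat_meas: "sets A = sets X \<Longrightarrow> sets B = sets X \<Longrightarrow> (\<lambda>(u, v). Khat k P0 u v) \<in> borel_measurable (A \<Otimes>\<^sub>M B)"
proof -
  assume A: "sets A = sets X" and B: "sets B = sets X"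
  have m1: "(\<lambda>z. mP k P0 (fst z)) \<in> borel_measurable (A \<Otimes>\<^sub>M B)"
    using measurable_compose[OF measurable_fst] mP_meas measurable_cong_sets[OF A refl] by blast
  have m2: "(\<lambda>z. mP k P0 (snd z)) \<in> borel_measurable (A \<Otimes>\<^sub>M B)"
    using measurable_compose[OF measurable_snd] mP_meas measurable_cong_sets[OF B refl] by blast
  have "(\<lambda>z. k (fst z) (snd z) - mP k P0 (fst z) - mP k P0 (snd z) + kernel_inner k P0 P0) \<in> borel_measurable (A \<Otimes>\<^sub>M B)"
    using k_meas2[OF A B] m1 m2 by (intro borel_measurable_add borel_measurable_diff) (auto simp: case_prod_beta')
  then show ?thesis by (simp add: Khat_def case_prod_beta')
qed

lemma Khat_sym: "u \<in> space X \<Longrightarrow> v \<in> space X \<Longrightarrow> Khat k P0 u v = Khat k P0 v u"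
  using kernel unfolding reproducing_kernel_def Khat_def by auto

lemma Khat_int1:
  assumes u: "u \<in> space X"
  shows "(\<integral>v. Khat k P0 u v \<partial>P0) = 0"
proof -
  interpret P0: prob_space P0 by (rule P0_prob)
  have mP0: "mP k P0 \<in> borel_measurable P0" using mP_meas measurable_cong_sets[OF P0_prob(2) refl] by blast
  have i1: "integrable P0 (k u)"
    using k_sec_meas[OF u] measurable_cong_sets[OF P0_prob(2) refl] k_bdd u spP0
    by (intro P0.integrable_const_bound[where B=1]) auto
  have i2: "integrable P0 (mP k P0)"
    using mP0 mP_bdd spP0 by (intro P0.integrable_const_bound[where B=1]) auto
  have "(\<integral>v. Khat k P0 u v \<partial>P0) = (\<integral>v. k u v \<partial>P0) - (\<integral>v. mP k P0 u \<partial>P0) - (\<integral>v. mP k P0 v \<partial>P0) + (\<integral>v. kernel_inner k P0 P0 \<partial>P0)"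
    unfolding Khat_def using i1 i2 by simp
  also have "\<dots> = 0" by (simp add: mP_def[symmetric] kap_eq[symmetric] P0.prob_space)
  finally show ?thesis .
qed

lemma Khat_int2:
  assumes v: "v \<in> space X"
  shows "(\<integral>u. Khat k P0 u v \<partial>P0) = 0"
proof -
  have "(\<integral>u. Khat k P0 u v \<partial>P0) = (\<integral>u. Khat k P0 v u \<partial>P0)"
    using v spP0 by (intro Bochner_Integration.integral_cong refl Khat_sym) auto
  also have "\<dots> = 0" by (rule Khat_int1[OF v])
  finally show ?thesis .
qed

lemma MMD2_rmeas:
  assumes y: "\<And>a. a < N \<Longrightarrow> y a \<in> space X" and w: "\<And>a. a < N \<Longrightarrow> 0 \<le> w a"
    and s: "(\<Sum>a<N. w a) = 1"
  shows "MMD2 k (rmeas X N w y) P0 = Dq k P0 N w y"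
proof -
  let ?R = "rmeas X N w y"
  have i1: "kernel_inner k ?R ?R = (\<Sum>a<N. w a * (\<Sum>b<N. w b * k (y a) (y b)))"
  proof -
    have "kernel_inner k ?R ?R = (\<integral>u. (\<Sum>b<N. w b * k u (y b)) \<partial>?R)"
      unfolding kernel_inner_def
      using rmeas_sets(2)[of X N w y]
      by (intro Bochner_Integration.integral_cong refl integral_rmeas[where y=y and w=w and N=N and X=X, OF y w] k_sec_meas) auto
    also have "\<dots> = (\<Sum>a<N. w a * (\<Sum>b<N. w b * k (y a) (y b)))"
    proof (rule integral_rmeas[where y=y and w=w and N=N and X=X, OF y w])
      have "(\<lambda>u. k u (y b)) \<in> borel_measurable X" if "b < N" for b
        using measurable_Pair1[OF k_meas] y[OF that] by simp
      then show "(\<lambda>u. \<Sum>b<N. w b * k u (y b)) \<in> borel_measurable X" by auto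
    qed
    finally show ?thesis .
  qed
  have i2: "kernel_inner k ?R P0 = (\<Sum>a<N. w a * mP k P0 (y a))"
  proof -
    have "(\<integral>u. mP k P0 u \<partial>?R) = (\<Sum>a<N. w a * mP k P0 (y a))"
      by (rule integral_rmeas[where y=y and w=w and N=N and X=X, OF y w mP_meas])
    then show ?thesis by (simp add: kernel_inner_def mP_def)
  qed
  have "Dq k P0 N w y = (\<Sum>a<N. \<Sum>b<N. w a * w b * k (y a) (y b)) - (\<Sum>a<N. \<Sum>b<N. w a * w b * mP k P0 (y a))
      - (\<Sum>a<N. \<Sum>b<N. w a * w b * mP k P0 (y b)) + (\<Sum>a<N. \<Sum>b<N. w a * w b * kernel_inner k P0 P0)"
    unfolding Dq_def Khat_def by (simp add: algebra_simps sum.distrib sum_subtractf)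
  also have "(\<Sum>a<N. \<Sum>b<N. w a * w b * mP k P0 (y a)) = (\<Sum>a<N. w a * mP k P0 (y a)) * (\<Sum>b<N. w b)"
    by (simp add: sum_distrib_left sum_distrib_right mult_ac)
  also have "(\<Sum>a<N. \<Sum>b<N. w a * w b * mP k P0 (y b)) = (\<Sum>b<N. w b * mP k P0 (y b)) * (\<Sum>a<N. w a)"
    by (subst sum.swap) (simp add: sum_distrib_left sum_distrib_right mult_ac)
  also have "(\<Sum>a<N. \<Sum>b<N. w a * w b * kernel_inner k P0 P0) = (\<Sum>a<N. w a) * (\<Sum>b<N. w b) * kernel_inner k P0 P0"
    by (simp add: sum_distrib_left sum_distrib_right mult_ac)
  finally have "Dq k P0 N w y = (\<Sum>a<N. \<Sum>b<N. w a * w b * k (y a) (y b)) - 2 * (\<Sum>a<N. w a * mP k P0 (y a)) + kernel_inner k P0 P0"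
    using s by simp
  moreover have "(\<Sum>a<N. \<Sum>b<N. w a * w b * k (y a) (y b)) = (\<Sum>a<N. w a * (\<Sum>b<N. w b * k (y a) (y b)))"
    by (simp add: sum_distrib_left mult.assoc)
  ultimately show ?thesis using i1 i2 by (simp add: MMD2_def)
qed


lemma ymap_meas:
  assumes xt: "\<And>i. i < T \<Longrightarrow> xt i \<in> space X" and a: "a < n + T"
  shows "(\<lambda>x. ymap n x xt a) \<in> measurable (PiM {..<n} (\<lambda>_. P0)) X"
proof (cases "a < n")
  case True
  have "(\<lambda>x. x a) \<in> measurable (PiM {..<n} (\<lambda>_. P0)) P0" using True by (intro measurable_component_singleton) auto
  then have "(\<lambda>x. x a) \<in> measurable (PiM {..<n} (\<lambda>_. P0)) X" using measurable_cong_sets[OF refl P0_prob(2)] by blast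
  then show ?thesis using True by (simp add: ymap_def)
next
  case False
  then have "xt (a - n) \<in> space X" using xt a by auto
  then show ?thesis using False by (simp add: ymap_def)
qed

lemma ymap_space:
  assumes x: "x \<in> space (PiM {..<n} (\<lambda>_. P0))" and xt: "\<And>i. i < T \<Longrightarrow> xt i \<in> space X" and a: "a < n + T"
  shows "ymap n x xt a \<in> space X"
  using x xt a spP0 by (auto simp: ymap_def space_PiM PiE_iff)

lemma data_exp:
  assumes w: "\<And>a. a < n + T \<Longrightarrow> 0 \<le> w a" and xt: "\<And>i. i < T \<Longrightarrow> xt i \<in> space X"
  shows "(\<integral>x. Dq k P0 (n+T) w (ymap n x xt) \<partial>PiM {..<n} (\<lambda>_. P0))
     \<le> 4 * (\<Sum>a<n. (w a)\<^sup>2) + 4 * (\<Sum>i<T. w (n + i))\<^sup>2"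
proof -
  define \<Omega> where "\<Omega> = PiM {..<n} (\<lambda>_::nat. P0)"
  interpret \<Omega>: prob_space \<Omega> unfolding \<Omega>_def using P0_prob by (intro prob_space_PiM) auto
  define E where "E = (\<lambda>a b. \<integral>x. Khat k P0 (ymap n x xt a) (ymap n x xt b) \<partial>\<Omega>)"
  have ysp: "\<And>x a. x \<in> space \<Omega> \<Longrightarrow> a < n + T \<Longrightarrow> ymap n x xt a \<in> space X"
    unfolding \<Omega>_def using ymap_space[where xt=xt and T=T and n=n] xt by blast
  have measK: "(\<lambda>x. Khat k P0 (ymap n x xt a) (ymap n x xt b)) \<in> borel_measurable \<Omega>"
    if "a < n + T" "b < n + T" for a b
  proof -
    have "(\<lambda>x. (ymap n x xt a, ymap n x xt b)) \<in> measurable \<Omega> (X \<Otimes>\<^sub>M X)"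
      unfolding \<Omega>_def using ymap_meas[OF xt that(1)] ymap_meas[OF xt that(2)] by (rule measurable_Pair)
    from measurable_compose[OF this Khat_meas[OF refl refl]] show ?thesis by simp
  qed
  have intK: "integrable \<Omega> (\<lambda>x. Khat k P0 (ymap n x xt a) (ymap n x xt b))"
    if "a < n + T" "b < n + T" for a b
    using measK[OF that] Khat_bdd ysp that
    by (intro \<Omega>.integrable_const_bound[where B=4]) auto
  have Ebd: "w a * w b * E a b \<le> (if a = b \<and> a < n then 4 * (w a)\<^sup>2 else if n \<le> a \<and> n \<le> b then 4 * (w a * w b) else 0)"
    if ab: "a < n + T" "b < n + T" for a b
  proof -
    have wab: "0 \<le> w a * w b" using w ab by simp
    have absE: "\<bar>E a b\<bar> \<le> 4"
      unfolding E_def using Khat_bdd ysp ab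
      by (intro prob_integral_abs_le[OF \<Omega>.prob_space_axioms]) auto
    show ?thesis
    proof (cases "a = b \<and> a < n")
      case True
      then show ?thesis using absE wab mult_left_mono[of "E a b" 4 "w a * w b"] by (simp add: power2_eq_square abs_le_iff)
    next
      case nd: False
      show ?thesis
      proof (cases "n \<le> a \<and> n \<le> b")
        case True
        then show ?thesis using nd absE wab mult_left_mono[of "E a b" 4 "w a * w b"] by (simp add: abs_le_iff mult.commute)
      next
        case False
        have "E a b = 0"
        proof (cases "a < n")
          case an: True
          show ?thesis
          proof (cases "b < n")
            case bn: True
            with an nd have "a \<noteq> b" by auto
            have "E a b = (\<integral>x. Khat k P0 (x a) (x b) \<partial>\<Omega>)"
              using an bn by (simp add: E_def ymap_def)
            also have "\<dots> = (\<integral>u. (\<integral>v. Khat k P0 u v \<partial>P0) \<partial>P0)"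
              unfolding \<Omega>_def using an bn \<open>a \<noteq> b\<close> P0_prob Khat_meas[OF P0_prob(2) P0_prob(2)] Khat_bdd spP0
              by (intro PiM_pair_integral[where B=4]) auto
            also have "\<dots> = (\<integral>u. 0 \<partial>P0)"
              using Khat_int1 spP0 by (intro Bochner_Integration.integral_cong) auto
            also have "\<dots> = 0" by simp
            finally show ?thesis .
          next
            case bn: False
            have zs: "xt (b - n) \<in> space X" using xt ab bn by auto
            have "E a b = (\<integral>x. Khat k P0 (x a) (xt (b - n)) \<partial>\<Omega>)"
              using an bn by (simp add: E_def ymap_def)
            also have "\<dots> = (\<integral>u. Khat k P0 u (xt (b - n)) \<partial>P0)"
              unfolding \<Omega>_def using an P0_prob measurable_Pair1[OF Khat_meas[OF P0_prob(2) P0_prob(2)]] zs spP0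
              by (intro PiM_single_integral) auto
            also have "\<dots> = 0" using Khat_int2[OF zs] .
            finally show ?thesis .
          qed
        next
          case an: False
          then have bn: "b < n" using False by auto
          have zs: "xt (a - n) \<in> space X" using xt ab an by auto
          have "E a b = (\<integral>x. Khat k P0 (xt (a - n)) (x b) \<partial>\<Omega>)"
            using an bn by (simp add: E_def ymap_def)
          also have "\<dots> = (\<integral>v. Khat k P0 (xt (a - n)) v \<partial>P0)"
            unfolding \<Omega>_def using bn P0_prob measurable_Pair2[OF Khat_meas[OF P0_prob(2) P0_prob(2)]] zs spP0
            by (intro PiM_single_integral) auto
          also have "\<dots> = 0" using Khat_int1[OF zs] .
          finally show ?thesis .
        qed
        then show ?thesis using nd False by auto
      qed
    qed
  qed
  have "(\<integral>x. Dq k P0 (n+T) w (ymap n x xt) \<partial>\<Omega>) = (\<Sum>a<n+T. \<Sum>b<n+T. w a * w b * E a b)"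
  proof -
    have "(\<integral>x. Dq k P0 (n+T) w (ymap n x xt) \<partial>\<Omega>) = (\<Sum>a<n+T. (\<integral>x. (\<Sum>b<n+T. w a * w b * Khat k P0 (ymap n x xt a) (ymap n x xt b)) \<partial>\<Omega>))"
      unfolding Dq_def by (intro Bochner_Integration.integral_sum) (auto intro!: Bochner_Integration.integrable_sum integrable_mult_right intK)
    also have "\<dots> = (\<Sum>a<n+T. \<Sum>b<n+T. w a * w b * E a b)"
    proof (intro sum.cong refl)
      fix a assume a: "a \<in> {..<n+T}"
      have "(\<integral>x. (\<Sum>b<n+T. w a * w b * Khat k P0 (ymap n x xt a) (ymap n x xt b)) \<partial>\<Omega>)
          = (\<Sum>b<n+T. (\<integral>x. w a * w b * Khat k P0 (ymap n x xt a) (ymap n x xt b) \<partial>\<Omega>))"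
        using a by (intro Bochner_Integration.integral_sum integrable_mult_right intK) auto
      also have "\<dots> = (\<Sum>b<n+T. w a * w b * E a b)"
        unfolding E_def by simp
      finally show "(\<integral>x. (\<Sum>b<n+T. w a * w b * Khat k P0 (ymap n x xt a) (ymap n x xt b)) \<partial>\<Omega>) = (\<Sum>b<n+T. w a * w b * E a b)" .
    qed
    finally show ?thesis .
  qed
  also have "\<dots> \<le> (\<Sum>a<n+T. \<Sum>b<n+T. (if a = b \<and> a < n then 4 * (w a)\<^sup>2 else if n \<le> a \<and> n \<le> b then 4 * (w a * w b) else 0))"
    using Ebd by (intro sum_mono) auto
  also have "\<dots> = 4 * (\<Sum>a<n. (w a)\<^sup>2) + 4 * (\<Sum>i<T. w (n + i))\<^sup>2"
  proof -
    have A: "(\<Sum>b<n+T. (if a = b \<and> a < n then 4 * (w a)\<^sup>2 else if n \<le> a \<and> n \<le> b then 4 * (w a * w b) else 0)) = 4 * (w a)\<^sup>2"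
      if "a < n" for a
    proof -
      have "(\<Sum>b<n+T. (if a = b \<and> a < n then 4 * (w a)\<^sup>2 else if n \<le> a \<and> n \<le> b then 4 * (w a * w b) else 0))
          = (\<Sum>b<n+T. (if a = b then 4 * (w a)\<^sup>2 else 0))"
        using that by (intro sum.cong refl) auto
      also have "\<dots> = 4 * (w a)\<^sup>2" using that by (simp add: sum.delta)
      finally show ?thesis .
    qed
    have B: "(\<Sum>b<n+T. (if n + i = b \<and> n + i < n then 4 * (w (n+i))\<^sup>2 else if n \<le> n + i \<and> n \<le> b then 4 * (w (n+i) * w b) else 0))
        = (\<Sum>j<T. 4 * (w (n+i) * w (n+j)))" for i
    proof -
      have "(\<Sum>b<n+T. (if n + i = b \<and> n + i < n then 4 * (w (n+i))\<^sup>2 else if n \<le> n + i \<and> n \<le> b then 4 * (w (n+i) * w b) else 0))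
          = (\<Sum>b<n+T. (if n \<le> b then 4 * (w (n+i) * w b) else 0))"
        by (intro sum.cong refl) auto
      also have "\<dots> = (\<Sum>b<n. (if n \<le> b then 4 * (w (n+i) * w b) else 0)) + (\<Sum>j<T. (if n \<le> n + j then 4 * (w (n+i) * w (n+j)) else 0))"
        by (rule sum_split_nT)
      also have "\<dots> = (\<Sum>j<T. 4 * (w (n+i) * w (n+j)))" by simp
      finally show ?thesis .
    qed
    have "(\<Sum>a<n+T. \<Sum>b<n+T. (if a = b \<and> a < n then 4 * (w a)\<^sup>2 else if n \<le> a \<and> n \<le> b then 4 * (w a * w b) else 0))
        = (\<Sum>a<n. \<Sum>b<n+T. (if a = b \<and> a < n then 4 * (w a)\<^sup>2 else if n \<le> a \<and> n \<le> b then 4 * (w a * w b) else 0))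
          + (\<Sum>i<T. \<Sum>b<n+T. (if n + i = b \<and> n + i < n then 4 * (w (n+i))\<^sup>2 else if n \<le> n + i \<and> n \<le> b then 4 * (w (n+i) * w b) else 0))"
      by (rule sum_split_nT)
    also have "\<dots> = (\<Sum>a<n. 4 * (w a)\<^sup>2) + (\<Sum>i<T. \<Sum>j<T. 4 * (w (n+i) * w (n+j)))"
      using A B by simp
    also have "\<dots> = 4 * (\<Sum>a<n. (w a)\<^sup>2) + 4 * (\<Sum>i<T. w (n + i))\<^sup>2"
      by (simp add: power2_eq_square sum_distrib_left sum_distrib_right mult_ac)
    finally show ?thesis .
  qed
  finally show ?thesis unfolding \<Omega>_def .
qed

end




lemma gamma_density_meas[measurable]: "gamma_density a \<in> borel_measurable borel"
  unfolding gamma_density_def[abs_def] by measurable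

lemma gamma_moment:
  assumes a: "0 < a"
  shows "(\<integral>\<^sup>+ x. ennreal (x ^ p) \<partial>density lborel (gamma_density a)) = ennreal (Gamma (a + real p) / Gamma a)"
proof -
  have Ga: "0 < Gamma a" using a by simp
  have "(\<integral>\<^sup>+ x. ennreal (x ^ p) \<partial>density lborel (gamma_density a)) = (\<integral>\<^sup>+ x. gamma_density a x * ennreal (x ^ p) \<partial>lborel)"
    by (rule nn_integral_density) auto
  also have "\<dots> = (\<integral>\<^sup>+ x. ennreal (indicator {0..} x * x powr (a + real p - 1) / exp x) * ennreal (1 / Gamma a) \<partial>lborel)"
  proof (rule nn_integral_cong)
    fix x :: real
    show "gamma_density a x * ennreal (x ^ p) = ennreal (indicator {0..} x * x powr (a + real p - 1) / exp x) * ennreal (1 / Gamma a)"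
    proof (cases "0 < x")
      case True
      have "x powr (a - 1) * exp (- x) / Gamma a * x ^ p = x powr (a + real p - 1) / exp x * (1 / Gamma a)"
        using True by (simp add: powr_realpow[symmetric] powr_add[symmetric] exp_minus field_simps)
      then show ?thesis using True Ga
        by (simp add: gamma_density_def ennreal_mult'[symmetric] ennreal_mult''[symmetric] del: ennreal_mult)
    next
      case False
      then show ?thesis by (cases "x = 0") (auto simp: gamma_density_def indicator_def)
    qed
  qed
  also have "\<dots> = (\<integral>\<^sup>+ x. ennreal (indicator {0..} x * x powr (a + real p - 1) / exp x) \<partial>lborel) * ennreal (1 / Gamma a)"
    by (rule nn_integral_multc) auto
  also have "\<dots> = ennreal (Gamma (a + real p)) * ennreal (1 / Gamma a)"
    using Gamma_conv_nn_integral_real[of "a + real p"] a by simp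
  also have "\<dots> = ennreal (Gamma (a + real p) / Gamma a)"
    using a Ga by (simp add: ennreal_mult''[symmetric] less_imp_le)
  finally show ?thesis .
qed

lemma prob_space_gamma:
  assumes a: "0 < a"
  shows "prob_space (density lborel (gamma_density a))"
proof (rule prob_spaceI)
  have "emeasure (density lborel (gamma_density a)) (space (density lborel (gamma_density a)))
      = (\<integral>\<^sup>+ x. ennreal (x ^ 0) \<partial>density lborel (gamma_density a))"
    by (simp add: nn_integral_const)
  also have "\<dots> = 1" using gamma_moment[OF a, of 0] a Gamma_real_pos[OF a] by simp
  finally show "emeasure (density lborel (gamma_density a)) (space (density lborel (gamma_density a))) = 1" .
qed

lemma gamma_mean: "0 < a \<Longrightarrow> (\<integral>\<^sup>+ x. ennreal x \<partial>density lborel (gamma_density a)) = ennreal a"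
proof -
  assume a: "0 < a"
  have "Gamma (a + 1) = a * Gamma a" by (rule Gamma_plus1) (use a in \<open>auto dest: nonpos_Ints_nonpos\<close>)
  then show ?thesis using gamma_moment[of a 1] a Gamma_real_pos[OF a] by simp
qed

lemma gamma1_second: "(\<integral>\<^sup>+ x. ennreal (x ^ 2) \<partial>density lborel (gamma_density 1)) = 2"
proof -
  have "Gamma (1 + real 2) = 2"
    using Gamma_fact[of 2] by (simp add: numeral_3_eq_3 add.commute)
  then show ?thesis using gamma_moment[of 1 2] by simp
qed

lemma gamma1_exp: "(\<integral>\<^sup>+ x. ennreal (exp (- x)) \<partial>density lborel (gamma_density 1)) = ennreal (1 / 2)"
proof -
  have "(\<integral>\<^sup>+ x. ennreal (exp (- x)) \<partial>density lborel (gamma_density 1)) = (\<integral>\<^sup>+ x. gamma_density 1 x * ennreal (exp (- x)) \<partial>lborel)"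
    by (rule nn_integral_density) auto
  also have "\<dots> = (\<integral>\<^sup>+ x. ennreal (erlang_density 0 2 x * (1 / 2)) \<partial>lborel)"
  proof (rule nn_integral_cong_AE)
    show "AE x in lborel. gamma_density 1 x * ennreal (exp (- x)) = ennreal (erlang_density 0 2 x * (1 / 2))"
      using AE_lborel_singleton[of 0]
    proof eventually_elim
      case (elim x)
      show ?case
      proof (cases "0 < x")
        case True
        have "exp (- x) * exp (- x) = exp (- 2 * x)" by (simp add: exp_add[symmetric])
        then show ?thesis using True
          by (simp add: gamma_density_def erlang_density_def ennreal_mult''[symmetric] del: ennreal_mult)
      next
        case False
        then show ?thesis using elim by (simp add: gamma_density_def erlang_density_def)
      qed
    qed
  qed
  also have "\<dots> = (\<integral>\<^sup>+ x. ennreal (erlang_density 0 2 x) * ennreal (1 / 2) \<partial>lborel)"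
    by (intro nn_integral_cong ennreal_mult'') simp
  also have "\<dots> = (\<integral>\<^sup>+ x. ennreal (erlang_density 0 2 x) \<partial>lborel) * ennreal (1 / 2)"
    by (rule nn_integral_multc) auto
  also have "(\<integral>\<^sup>+ x. ennreal (erlang_density 0 2 x) \<partial>lborel) = 1"
    using nn_integral_erlang_ith_moment[of 2 0 0] by simp
  finally show ?thesis by simp
qed


lemma exp_half_bound:
  assumes n: "1 \<le> n"
  shows "exp (real n / 2) * (1 / 2) ^ n \<le> 5 / real n"
proof -
  have e: "exp (1/2::real) \<le> 5 / 3"
  proof -
    have "exp (1/2::real) * exp (1/2) = exp 1" by (simp add: exp_add[symmetric])
    also have "\<dots> < 272/100" by (rule e_less_272)
    finally have "exp (1/2::real) * exp (1/2) < (5/3) * (5/3)" by simp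
    show ?thesis
    proof (rule ccontr)
      assume "\<not> ?thesis"
      then have "5/3 < exp (1/2::real)" by simp
      then have "(5/3) * (5/3) < exp (1/2::real) * exp (1/2)" by (intro mult_strict_mono) auto
      with \<open>exp (1/2::real) * exp (1/2) < (5/3) * (5/3)\<close> show False by simp
    qed
  qed
  have "exp (real n / 2) = exp (1/2) ^ n"
    using exp_of_nat_mult[of n "1/2::real"] by simp
  then have "exp (real n / 2) * (1 / 2) ^ n = (exp (1/2) / 2) ^ n"
    by (simp add: power_divide)
  also have "\<dots> \<le> (5/6) ^ n"
    using e by (intro power_mono) auto
  also have "\<dots> \<le> 5 / real n"
  proof -
    have "1 + real n * (1/5) \<le> (1 + 1/5 :: real) ^ n"
      by (rule Bernoulli_inequality) simp
    then have "real n / 5 \<le> (6/5 :: real) ^ n" by simp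
    then have "real n / 5 * (5/6) ^ n \<le> (6/5) ^ n * (5/6 :: real) ^ n"
      by (intro mult_right_mono) auto
    also have "(6/5) ^ n * (5/6 :: real) ^ n = 1"
      by (simp add: power_mult_distrib[symmetric])
    finally have "real n * (5/6 :: real) ^ n \<le> 5" by simp
    then show ?thesis using n by (simp add: field_simps)
  qed
  finally show ?thesis .
qed

lemma prod_split_nT: "(\<Prod>a<n+T. g a) = (\<Prod>a<n. g a) * (\<Prod>k<T. g (n + k))" for g :: "nat \<Rightarrow> 'b::comm_monoid_mult"
  by (induct T) (simp_all add: mult.assoc)

definition Bw :: "nat \<Rightarrow> nat \<Rightarrow> (nat \<Rightarrow> real) \<Rightarrow> real" where
  "Bw n T w = 4 * (\<Sum>a<n. (w a)\<^sup>2) + 4 * (\<Sum>i<T. w (n + i))\<^sup>2"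

definition normw :: "nat \<Rightarrow> (nat \<Rightarrow> real) \<Rightarrow> nat \<Rightarrow> real" where
  "normw N g = (\<lambda>i\<in>{..<N}. g i / (\<Sum>j<N. g j))"

lemma Bw_pointwise:
  assumes n: "1 \<le> n" and g: "\<And>i. i < n + T \<Longrightarrow> 0 < g i"
  shows "Bw n T (normw (n+T) g) \<le> 16 / (real n)\<^sup>2 * (\<Sum>i<n. (g i)\<^sup>2) + 8 / real n * (\<Sum>k<T. g (n + k))
      + 8 * exp (real n / 2) * (\<Prod>i<n. exp (- g i))"
proof -
  define Sd where "Sd = (\<Sum>i<n. g i)"
  define Gt where "Gt = (\<Sum>k<T. g (n + k))"
  define S where "S = (\<Sum>j<n+T. g j)"
  have S: "S = Sd + Gt" unfolding S_def Sd_def Gt_def by (rule sum_split_nT)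
  have Sdpos: "0 < Sd" unfolding Sd_def using n g by (intro sum_pos) (auto simp: lessThan_empty_iff)
  have Gt0: "0 \<le> Gt" unfolding Gt_def using g by (intro sum_nonneg) (auto simp: less_imp_le)
  have Spos: "0 < S" using S Sdpos Gt0 by simp
  have w1: "(\<Sum>a<n. (normw (n+T) g a)\<^sup>2) = (\<Sum>a<n. (g a)\<^sup>2) / S\<^sup>2"
    by (simp add: normw_def power_divide sum_divide_distrib S_def)
  have w2: "(\<Sum>i<T. normw (n+T) g (n + i)) = Gt / S"
    by (simp add: normw_def sum_divide_distrib S_def Gt_def)
  have sq_le: "(\<Sum>a<n. (g a)\<^sup>2) \<le> Sd\<^sup>2"
  proof -
    have "(\<Sum>a<n. (g a)\<^sup>2) \<le> (\<Sum>a<n. g a * Sd)"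
    proof (intro sum_mono)
      fix a assume a: "a \<in> {..<n}"
      have "g a \<le> Sd" unfolding Sd_def using a g by (intro member_le_sum) (auto simp: less_imp_le)
      then show "(g a)\<^sup>2 \<le> g a * Sd" using g[of a] a by (simp add: power2_eq_square mult_left_mono)
    qed
    also have "\<dots> = Sd\<^sup>2" by (simp add: Sd_def sum_distrib_right power2_eq_square)
    finally show ?thesis .
  qed
  have sq0: "0 \<le> (\<Sum>a<n. (g a)\<^sup>2)" by (intro sum_nonneg) auto
  have q1: "(\<Sum>a<n. (g a)\<^sup>2) / S\<^sup>2 \<le> 1"
  proof -
    have "Sd\<^sup>2 \<le> S\<^sup>2" using S Sdpos Gt0 by (intro power_mono) auto
    then show ?thesis using sq_le Spos by (simp add: divide_le_eq_1)
  qed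
  have q2: "Gt / S \<le> 1" using S Sdpos Gt0 by simp
  have q20: "0 \<le> Gt / S" using Gt0 Spos by simp
  have E0: "0 \<le> 8 * exp (real n / 2) * (\<Prod>i<n. exp (- g i))" by (simp add: prod_nonneg)
  have Bw_eq: "Bw n T (normw (n+T) g) = 4 * ((\<Sum>a<n. (g a)\<^sup>2) / S\<^sup>2) + 4 * (Gt / S)\<^sup>2"
    unfolding Bw_def w1 w2 ..
  show ?thesis
  proof (cases "real n / 2 \<le> Sd")
    case True
    have "(\<Sum>a<n. (g a)\<^sup>2) / S\<^sup>2 \<le> (\<Sum>a<n. (g a)\<^sup>2) / (real n / 2)\<^sup>2"
      using True sq0 n S Gt0 by (intro divide_left_mono power_mono) auto
    also have "\<dots> = 4 / (real n)\<^sup>2 * (\<Sum>a<n. (g a)\<^sup>2)" by (simp add: power_divide)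
    finally have t1: "(\<Sum>a<n. (g a)\<^sup>2) / S\<^sup>2 \<le> 4 / (real n)\<^sup>2 * (\<Sum>a<n. (g a)\<^sup>2)" .
    have "(Gt / S)\<^sup>2 \<le> Gt / S" unfolding power2_eq_square using q2 q20 by (rule mult_left_le)
    also have "\<dots> \<le> Gt / (real n / 2)" using True Gt0 n S by (intro divide_left_mono) auto
    also have "\<dots> = 2 / real n * Gt" by simp
    finally have t2: "(Gt / S)\<^sup>2 \<le> 2 / real n * Gt" .
    show ?thesis unfolding Bw_eq Gt_def[symmetric] using t1 t2 E0 by linarith
  next
    case False
    have "1 \<le> exp (real n / 2 - Sd)" using False by simp
    also have "exp (real n / 2 - Sd) = exp (real n / 2) * (\<Prod>i<n. exp (- g i))"
    proof -
      have "exp (- Sd) = (\<Prod>i<n. exp (- g i))"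
        unfolding Sd_def by (simp add: exp_sum[symmetric] sum_negf[symmetric])
      moreover have "exp (real n / 2 - Sd) = exp (real n / 2) * exp (- Sd)"
        by (metis exp_add diff_conv_add_uminus)
      ultimately show ?thesis by simp
    qed
    finally have "1 \<le> exp (real n / 2) * (\<Prod>i<n. exp (- g i))" .
    moreover have "(Gt / S)\<^sup>2 \<le> 1" using q2 q20 by (simp add: power_le_one)
    moreover have "0 \<le> 16 / (real n)\<^sup>2 * (\<Sum>i<n. (g i)\<^sup>2)" using sq0 by simp
    moreover have "0 \<le> 8 / real n * Gt" using Gt0 by simp
    ultimately show ?thesis unfolding Bw_eq Gt_def[symmetric] using q1 by linarith
  qed
qed


lemma pwp_pos: "0 < \<alpha> \<Longrightarrow> 1 \<le> T \<Longrightarrow> 0 < post_weights_param n T \<alpha> i"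
  by (simp add: post_weights_param_def)

lemma dirichlet_eq: "dirichlet N a = distr (PiM {..<N} (\<lambda>i. density lborel (gamma_density (a i)))) (PiM {..<N} (\<lambda>_. borel)) (normw N)"
  by (simp add: dirichlet_def normw_def[abs_def])

lemma normw_meas: "normw N \<in> measurable (PiM {..<N} (\<lambda>i. density lborel (gamma_density (a i)))) (PiM {..<N} (\<lambda>_. borel))"
proof -
  have c: "(\<lambda>g. g i) \<in> borel_measurable (PiM {..<N} (\<lambda>i. density lborel (gamma_density (a i))))" if "i < N" for i
  proof -
    have "(\<lambda>g. g i) \<in> measurable (PiM {..<N} (\<lambda>i. density lborel (gamma_density (a i)))) (density lborel (gamma_density (a i)))"
      using that by (intro measurable_component_singleton) auto
    then show ?thesis by (simp add: measurable_cong_sets[OF refl sets_density])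
  qed
  show ?thesis unfolding normw_def
    by (rule measurable_restrict) (use c in auto)
qed

lemma component_nn_integral:
  assumes M: "\<And>i. i \<in> I \<Longrightarrow> prob_space (M i)" and i: "i \<in> I" and f: "f \<in> borel_measurable (M i)"
  shows "(\<integral>\<^sup>+ g. f (g i) \<partial>PiM I M) = (\<integral>\<^sup>+ x. f x \<partial>M i)"
proof -
  have "(\<integral>\<^sup>+ g. f (g i) \<partial>PiM I M) = (\<integral>\<^sup>+ x. f x \<partial>distr (PiM I M) (M i) (\<lambda>g. g i))"
    using i f by (intro nn_integral_distr[symmetric]) auto
  also have "\<dots> = (\<integral>\<^sup>+ x. f x \<partial>M i)" using distr_PiM_component[of I M i, OF M i] by simp
  finally show ?thesis .
qed

context
  fixes n T :: nat and \<alpha> :: real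
  assumes n: "1 \<le> n" and T: "1 \<le> T" and \<alpha>: "0 < \<alpha>"
begin

definition "MG i = density lborel (gamma_density (post_weights_param n T \<alpha> i))"

lemma MG_prob: "prob_space (MG i)"
  unfolding MG_def using pwp_pos[OF \<alpha> T] by (rule prob_space_gamma)

lemma MG_sets: "sets (MG i) = sets borel" by (simp add: MG_def)

interpretation MGP: product_sigma_finite MG
  by (simp add: product_sigma_finite_def prob_space_imp_sigma_finite MG_prob)

lemma dirichlet_AE: "AE w in dirichlet (n+T) (post_weights_param n T \<alpha>). (\<forall>a<n+T. 0 \<le> w a) \<and> (\<Sum>a<n+T. w a) = 1"
proof -
  have pos: "AE g in PiM {..<n+T} MG. \<forall>i\<in>{..<n+T}. 0 < g i"
  proof (rule eventually_ball_finite)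
    show "\<forall>i\<in>{..<n+T}. AE g in PiM {..<n+T} MG. 0 < g i"
    proof
      fix i assume i: "i \<in> {..<n+T}"
      have "AE x in MG i. 0 < x"
        unfolding MG_def by (subst AE_density) (auto simp: gamma_density_def split: if_splits)
      then show "AE g in PiM {..<n+T} MG. 0 < g i" using i MG_prob by (intro AE_PiM_component) auto
    qed
  qed simp
  have "AE g in PiM {..<n+T} MG. (\<forall>a<n+T. 0 \<le> normw (n+T) g a) \<and> (\<Sum>a<n+T. normw (n+T) g a) = 1"
    using pos
  proof eventually_elim
    case (elim g)
    have S: "0 < (\<Sum>j<n+T. g j)" using elim n by (intro sum_pos) (auto simp: lessThan_empty_iff)
    have "(\<Sum>a<n+T. normw (n+T) g a) = (\<Sum>a<n+T. g a / (\<Sum>j<n+T. g j))" by (simp add: normw_def)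
    also have "\<dots> = 1" using S by (simp add: sum_divide_distrib[symmetric])
    finally show ?case using elim S by (auto simp: normw_def less_imp_le)
  qed
  then show ?thesis
    unfolding dirichlet_eq MG_def[symmetric, abs_def]
    using normw_meas[of "n+T" "post_weights_param n T \<alpha>"]
    by (subst AE_distr_iff) (auto simp: MG_def[abs_def])
qed


lemma MG_one: "i < n \<Longrightarrow> MG i = density lborel (gamma_density 1)"
  by (simp add: MG_def post_weights_param_def)

lemma MG_prior: "MG (n + k) = density lborel (gamma_density (\<alpha> / real T))"
  by (simp add: MG_def post_weights_param_def)

lemma dirichlet_bound:
  "(\<integral>\<^sup>+ w. ennreal (Bw n T w) \<partial>dirichlet (n+T) (post_weights_param n T \<alpha>)) \<le> ennreal ((72 + 8 * \<alpha>) / real n)"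
proof -
  define G where "G = PiM {..<n+T} MG"
  have MGp: "\<And>i. i \<in> {..<n+T} \<Longrightarrow> prob_space (MG i)" using MG_prob by auto
  have dir: "dirichlet (n+T) (post_weights_param n T \<alpha>) = distr G (PiM {..<n+T} (\<lambda>_. borel)) (normw (n+T))"
    unfolding dirichlet_eq G_def MG_def[abs_def] ..
  have nm: "normw (n+T) \<in> measurable G (PiM {..<n+T} (\<lambda>_. borel))"
    unfolding G_def MG_def[abs_def] by (rule normw_meas)
  have compB: "(\<lambda>w. w a) \<in> borel_measurable (PiM {..<n+T} (\<lambda>_. borel))" if "a < n + T" for a
    using that by (intro measurable_component_singleton) auto
  have compG: "(\<lambda>g. g a) \<in> borel_measurable G" if "a < n + T" for a
  proof -
    have "(\<lambda>g. g a) \<in> measurable G (MG a)" unfolding G_def using that by (intro measurable_component_singleton) auto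
    then show ?thesis by (simp add: measurable_cong_sets[OF refl MG_sets])
  qed
  have Bmeas: "(\<lambda>w. ennreal (Bw n T w)) \<in> borel_measurable (PiM {..<n+T} (\<lambda>_. borel))"
  proof -
    have "(\<lambda>w. Bw n T w) \<in> borel_measurable (PiM {..<n+T} (\<lambda>_. borel))"
      unfolding Bw_def using compB by (intro borel_measurable_add borel_measurable_times borel_measurable_power borel_measurable_sum borel_measurable_const) auto
    then show ?thesis by simp
  qed
  have pos: "AE g in G. \<forall>i\<in>{..<n+T}. 0 < g i"
  proof (rule eventually_ball_finite)
    show "\<forall>i\<in>{..<n+T}. AE g in G. 0 < g i"
    proof
      fix i assume i: "i \<in> {..<n+T}"
      have "AE x in MG i. 0 < x"
        unfolding MG_def by (subst AE_density) (auto simp: gamma_density_def split: if_splits)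
      then show "AE g in G. 0 < g i" unfolding G_def using i MG_prob by (intro AE_PiM_component) auto
    qed
  qed simp
  define R where "R = (\<lambda>g. ennreal (16 / (real n)\<^sup>2) * (\<Sum>i<n. ennreal ((g i)\<^sup>2)) + ennreal (8 / real n) * (\<Sum>k<T. ennreal (g (n + k)))
      + ennreal (8 * exp (real n / 2)) * (\<Prod>i<n. ennreal (exp (- g i))))"
  have "(\<integral>\<^sup>+ w. ennreal (Bw n T w) \<partial>dirichlet (n+T) (post_weights_param n T \<alpha>)) = (\<integral>\<^sup>+ g. ennreal (Bw n T (normw (n+T) g)) \<partial>G)"
    unfolding dir using nm Bmeas by (subst nn_integral_distr) auto
  also have "\<dots> \<le> (\<integral>\<^sup>+ g. R g \<partial>G)"
  proof (rule nn_integral_mono_AE)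
    show "AE g in G. ennreal (Bw n T (normw (n+T) g)) \<le> R g"
      using pos
    proof eventually_elim
      case (elim g)
      have gp: "\<And>i. i < n + T \<Longrightarrow> 0 < g i" using elim by auto
      have gk: "\<And>k. k < T \<Longrightarrow> 0 \<le> g (n + k)" using gp by (simp add: less_imp_le)
      have r: "16 / (real n)\<^sup>2 * (\<Sum>i<n. (g i)\<^sup>2) + 8 / real n * (\<Sum>k<T. g (n + k)) + 8 * exp (real n / 2) * (\<Prod>i<n. exp (- g i))
          = 16 / (real n)\<^sup>2 * (\<Sum>i<n. (g i)\<^sup>2) + 8 / real n * (\<Sum>k<T. g (n + k)) + 8 * exp (real n / 2) * (\<Prod>i<n. exp (- g i))" ..
      have "ennreal (Bw n T (normw (n+T) g)) \<le> ennreal (16 / (real n)\<^sup>2 * (\<Sum>i<n. (g i)\<^sup>2) + 8 / real n * (\<Sum>k<T. g (n + k)) + 8 * exp (real n / 2) * (\<Prod>i<n. exp (- g i)))"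
        using Bw_pointwise[OF n gp] by (rule ennreal_leI)
      also have "\<dots> = R g"
      proof -
        have s1: "0 \<le> (\<Sum>i<n. (g i)\<^sup>2)" by (intro sum_nonneg) auto
        have s2: "0 \<le> (\<Sum>k<T. g (n + k))" using gk by (intro sum_nonneg) auto
        have s3: "0 \<le> (\<Prod>i<n. exp (- g i))" by (intro prod_nonneg) auto
        have e1: "(\<Sum>i<n. ennreal ((g i)\<^sup>2)) = ennreal (\<Sum>i<n. (g i)\<^sup>2)" by (rule sum_ennreal) auto
        have e2: "(\<Sum>k<T. ennreal (g (n + k))) = ennreal (\<Sum>k<T. g (n + k))" using gk by (intro sum_ennreal) auto
        have e3: "(\<Prod>i<n. ennreal (exp (- g i))) = ennreal (\<Prod>i<n. exp (- g i))" by (rule prod_ennreal) auto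
        show ?thesis unfolding R_def e1 e2 e3 using s1 s2 s3
          by (simp add: ennreal_plus[symmetric] ennreal_mult''[symmetric] del: ennreal_plus ennreal_mult)
      qed
      finally show ?case .
    qed
  qed
  also have "(\<integral>\<^sup>+ g. R g \<partial>G) = ennreal (16 / (real n)\<^sup>2) * (\<Sum>i<n. \<integral>\<^sup>+ g. ennreal ((g i)\<^sup>2) \<partial>G)
      + ennreal (8 / real n) * (\<Sum>k<T. \<integral>\<^sup>+ g. ennreal (g (n + k)) \<partial>G)
      + ennreal (8 * exp (real n / 2)) * (\<integral>\<^sup>+ g. (\<Prod>i<n. ennreal (exp (- g i))) \<partial>G)"
  proof -
    have m1: "(\<lambda>g. ennreal ((g i)\<^sup>2)) \<in> borel_measurable G" if "i < n" for i
      using compG[of i] that by auto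
    have m2: "(\<lambda>g. ennreal (g (n + k))) \<in> borel_measurable G" if "k < T" for k
      using compG[of "n+k"] that by auto
    have m3: "(\<lambda>g. (\<Prod>i<n. ennreal (exp (- g i)))) \<in> borel_measurable G"
      using compG by (intro borel_measurable_prod_ennreal) auto
    have m1': "(\<lambda>g. (\<Sum>i<n. ennreal ((g i)\<^sup>2))) \<in> borel_measurable G" using m1 by (intro borel_measurable_sum) auto
    have m2': "(\<lambda>g. (\<Sum>k<T. ennreal (g (n + k)))) \<in> borel_measurable G" using m2 by (intro borel_measurable_sum) auto
    note [measurable] = m1' m2' m3
    have A: "(\<integral>\<^sup>+g. (\<Sum>i<n. ennreal ((g i)\<^sup>2)) \<partial>G) = (\<Sum>i<n. \<integral>\<^sup>+g. ennreal ((g i)\<^sup>2) \<partial>G)"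
      by (rule nn_integral_sum) (use m1 in auto)
    have B: "(\<integral>\<^sup>+g. (\<Sum>k<T. ennreal (g (n + k))) \<partial>G) = (\<Sum>k<T. \<integral>\<^sup>+g. ennreal (g (n + k)) \<partial>G)"
      by (rule nn_integral_sum) (use m2 in auto)
    have "(\<integral>\<^sup>+ g. R g \<partial>G) = (\<integral>\<^sup>+ g. ennreal (16 / (real n)\<^sup>2) * (\<Sum>i<n. ennreal ((g i)\<^sup>2)) + ennreal (8 / real n) * (\<Sum>k<T. ennreal (g (n + k))) \<partial>G)
        + (\<integral>\<^sup>+ g. ennreal (8 * exp (real n / 2)) * (\<Prod>i<n. ennreal (exp (- g i))) \<partial>G)"
      unfolding R_def by (rule nn_integral_add) measurable
    also have "(\<integral>\<^sup>+ g. ennreal (16 / (real n)\<^sup>2) * (\<Sum>i<n. ennreal ((g i)\<^sup>2)) + ennreal (8 / real n) * (\<Sum>k<T. ennreal (g (n + k))) \<partial>G)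
        = (\<integral>\<^sup>+ g. ennreal (16 / (real n)\<^sup>2) * (\<Sum>i<n. ennreal ((g i)\<^sup>2)) \<partial>G) + (\<integral>\<^sup>+ g. ennreal (8 / real n) * (\<Sum>k<T. ennreal (g (n + k))) \<partial>G)"
      by (rule nn_integral_add) measurable
    also have "(\<integral>\<^sup>+ g. ennreal (16 / (real n)\<^sup>2) * (\<Sum>i<n. ennreal ((g i)\<^sup>2)) \<partial>G) = ennreal (16 / (real n)\<^sup>2) * (\<integral>\<^sup>+g. (\<Sum>i<n. ennreal ((g i)\<^sup>2)) \<partial>G)"
      by (rule nn_integral_cmult) measurable
    also have "(\<integral>\<^sup>+ g. ennreal (8 / real n) * (\<Sum>k<T. ennreal (g (n + k))) \<partial>G) = ennreal (8 / real n) * (\<integral>\<^sup>+g. (\<Sum>k<T. ennreal (g (n + k))) \<partial>G)"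
      by (rule nn_integral_cmult) measurable
    also have "(\<integral>\<^sup>+ g. ennreal (8 * exp (real n / 2)) * (\<Prod>i<n. ennreal (exp (- g i))) \<partial>G) = ennreal (8 * exp (real n / 2)) * (\<integral>\<^sup>+ g. (\<Prod>i<n. ennreal (exp (- g i))) \<partial>G)"
      by (rule nn_integral_cmult) measurable
    finally show ?thesis unfolding A B .
  qed
  also have "(\<Sum>i<n. \<integral>\<^sup>+ g. ennreal ((g i)\<^sup>2) \<partial>G) = (\<Sum>i<n. 2)"
  proof (rule sum.cong[OF refl])
    fix i assume i: "i \<in> {..<n}"
    have "(\<integral>\<^sup>+ g. ennreal ((g i)\<^sup>2) \<partial>G) = (\<integral>\<^sup>+ x. ennreal (x\<^sup>2) \<partial>MG i)"
      unfolding G_def using i MGp by (intro component_nn_integral) (auto simp: measurable_cong_sets[OF MG_sets refl])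
    also have "\<dots> = 2" using i by (simp add: MG_one gamma1_second)
    finally show "(\<integral>\<^sup>+ g. ennreal ((g i)\<^sup>2) \<partial>G) = 2" .
  qed
  also have "(\<Sum>k<T. \<integral>\<^sup>+ g. ennreal (g (n + k)) \<partial>G) = (\<Sum>k<T. ennreal (\<alpha> / real T))"
  proof (rule sum.cong[OF refl])
    fix k assume k: "k \<in> {..<T}"
    have "(\<integral>\<^sup>+ g. ennreal (g (n + k)) \<partial>G) = (\<integral>\<^sup>+ x. ennreal x \<partial>MG (n + k))"
      unfolding G_def using k MGp by (intro component_nn_integral) (auto simp: measurable_cong_sets[OF MG_sets refl])
    also have "\<dots> = ennreal (\<alpha> / real T)" using \<alpha> T by (simp add: MG_prior gamma_mean)
    finally show "(\<integral>\<^sup>+ g. ennreal (g (n + k)) \<partial>G) = ennreal (\<alpha> / real T)" .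
  qed
  also have "(\<integral>\<^sup>+ g. (\<Prod>i<n. ennreal (exp (- g i))) \<partial>G) = ennreal ((1/2) ^ n)"
  proof -
    define f where "f = (\<lambda>i x. if i < n then ennreal (exp (- x)) else (1::ennreal))"
    have "(\<integral>\<^sup>+ g. (\<Prod>i<n. ennreal (exp (- g i))) \<partial>G) = (\<integral>\<^sup>+ g. (\<Prod>i\<in>{..<n+T}. f i (g i)) \<partial>G)"
      by (intro nn_integral_cong) (simp add: f_def prod_split_nT)
    also have "\<dots> = (\<Prod>i\<in>{..<n+T}. integral\<^sup>N (MG i) (f i))"
      unfolding G_def by (rule MGP.product_nn_integral_prod) (auto simp: f_def measurable_cong_sets[OF MG_sets refl])
    also have "\<dots> = (\<Prod>i\<in>{..<n+T}. (if i < n then ennreal (1/2) else 1))"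
    proof (rule prod.cong[OF refl])
      fix i assume i: "i \<in> {..<n+T}"
      show "integral\<^sup>N (MG i) (f i) = (if i < n then ennreal (1/2) else 1)"
      proof (cases "i < n")
        case True
        then show ?thesis by (simp add: f_def MG_one gamma1_exp)
      next
        case False
        interpret p: prob_space "MG i" by (rule MG_prob)
        show ?thesis using False p.emeasure_space_1 by (simp add: f_def)
      qed
    qed
    also have "\<dots> = ennreal (1/2) ^ n"
      by (simp add: prod_split_nT)
    also have "\<dots> = ennreal ((1/2) ^ n)"
      by (rule ennreal_power) simp
    finally show ?thesis .
  qed
  also have "ennreal (16 / (real n)\<^sup>2) * (\<Sum>i<n. 2) + ennreal (8 / real n) * (\<Sum>k<T. ennreal (\<alpha> / real T))
      + ennreal (8 * exp (real n / 2)) * ennreal ((1/2) ^ n)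
      = ennreal (32 / real n + 8 * \<alpha> / real n + 8 * (exp (real n / 2) * (1/2) ^ n))"
  proof -
    have a: "(\<Sum>i<n. (2::ennreal)) = ennreal (2 * real n)" by (simp add: ennreal_of_nat_eq_real_of_nat ennreal_mult'' mult.commute)
    have b: "(\<Sum>k<T. ennreal (\<alpha> / real T)) = ennreal \<alpha>"
    proof -
      have "(\<Sum>k<T. ennreal (\<alpha> / real T)) = ennreal (real T) * ennreal (\<alpha> / real T)"
        by (simp add: ennreal_of_nat_eq_real_of_nat)
      also have "\<dots> = ennreal (real T * (\<alpha> / real T))"
        using \<alpha> by (intro ennreal_mult''[symmetric]) simp
      also have "\<dots> = ennreal \<alpha>" using T by simp
      finally show ?thesis .
    qed
    have c1: "ennreal (16 / (real n)\<^sup>2) * ennreal (2 * real n) = ennreal (32 / real n)"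
      using n by (simp add: ennreal_mult''[symmetric] power2_eq_square del: ennreal_mult)
    have c2: "ennreal (8 / real n) * ennreal \<alpha> = ennreal (8 * \<alpha> / real n)"
      using \<alpha> by (simp add: ennreal_mult''[symmetric] del: ennreal_mult)
    have c3: "ennreal (8 * exp (real n / 2)) * ennreal ((1/2) ^ n) = ennreal (8 * (exp (real n / 2) * (1/2) ^ n))"
      by (simp add: ennreal_mult''[symmetric] del: ennreal_mult)
    show ?thesis unfolding a b c1 c2 c3 using \<alpha>
      by (simp add: ennreal_plus[symmetric] del: ennreal_plus)
  qed
  also have "\<dots> \<le> ennreal ((72 + 8 * \<alpha>) / real n)"
  proof (rule ennreal_leI)
    have "8 * (exp (real n / 2) * (1/2) ^ n) \<le> 8 * (5 / real n)" using exp_half_bound[OF n] by simp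
    then show "32 / real n + 8 * \<alpha> / real n + 8 * (exp (real n / 2) * (1/2) ^ n) \<le> (72 + 8 * \<alpha>) / real n"
      by (simp add: add_divide_distrib)
  qed
  finally show ?thesis .
qed

end







lemma emeasure_distr_le: "emeasure (distr M N f) A \<le> emeasure M (f -` A \<inter> space M)"
  unfolding distr_def emeasure_measure_of_conv by auto

lemma main_bound:
  fixes X :: "'a measure" and k :: "'a \<Rightarrow> 'a \<Rightarrow> real"
    and \<Theta> :: "'p set" and P\<theta> :: "'p \<Rightarrow> 'a measure"
    and P0 F :: "'a measure" and C \<alpha> :: real and T :: nat
    and thetastar :: "'a measure \<Rightarrow> 'p" and m :: real and n :: nat
  assumes kernel: "reproducing_kernel X k"
    and k_meas: "(\<lambda>(x, y). k x y) \<in> borel_measurable (X \<Otimes>\<^sub>M X)"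
    and k_bdd: "\<forall>x\<in>space X. \<forall>y\<in>space X. \<bar>k x y\<bar> \<le> 1"
    and P\<theta>_prob: "\<forall>\<theta>\<in>\<Theta>. prob_space (P\<theta> \<theta>) \<and> sets (P\<theta> \<theta>) = sets X"
    and P0_prob: "prob_space P0" "sets P0 = sets X"
    and C_def: "(INF \<theta>\<in>\<Theta>. MMD k (P\<theta> \<theta>) P0) = C"
    and \<alpha>_pos: "\<alpha> > 0" and T_pos: "T \<ge> 1"
    and F_prob: "prob_space F" "sets F = sets X"
    and thetastar_min: "\<forall>P. prob_space P \<and> sets P = sets X \<longrightarrow>
          thetastar P \<in> \<Theta> \<and> (\<forall>\<theta>\<in>\<Theta>. MMD2 k P (P\<theta> (thetastar P)) \<le> MMD2 k P (P\<theta> \<theta>))"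
    and n: "1 \<le> n" and m: "0 < m"
  shows "(\<integral>x. measure (approx_posterior X F \<alpha> T n x)
                 {P \<in> space (subprob_algebra X). MMD k (P\<theta> (thetastar P)) P0 > C + m / sqrt (real n)}
              \<partial>(PiM {..<n} (\<lambda>_. P0))) \<le> 4 * (72 + 8 * \<alpha>) / m\<^sup>2"
proof -
  define N where "N = n + T"
  define Dir where "Dir = dirichlet N (post_weights_param n T \<alpha>)"
  define FT where "FT = PiM {..<T} (\<lambda>_::nat. F)"
  define Mn where "Mn = Dir \<Otimes>\<^sub>M FT"
  define Data where "Data = PiM {..<n} (\<lambda>_::nat. P0)"
  define S where "S = {P \<in> space (subprob_algebra X). MMD k (P\<theta> (thetastar P)) P0 > C + m / sqrt (real n)}"
  define s where "s = m\<^sup>2 / (4 * real n)"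
  define D where "D = (\<lambda>x \<omega>. Dq k P0 N (fst \<omega>) (ymap n x (snd \<omega>)))"
  define good where "good = (\<lambda>\<omega>::(nat \<Rightarrow> real) \<times> (nat \<Rightarrow> 'a). (\<forall>a<N. 0 \<le> fst \<omega> a) \<and> (\<Sum>a<N. fst \<omega> a) = 1)"
  have spP0: "space P0 = space X" and spF: "space F = space X"
    using sets_eq_imp_space_eq P0_prob(2) F_prob(2) by auto
  have s_pos: "0 < s" using m n by (simp add: s_def)
  interpret Dir: prob_space Dir
  proof -
    have "prob_space (PiM {..<N} (\<lambda>i. density lborel (gamma_density (post_weights_param n T \<alpha> i))))"
      using prob_space_gamma pwp_pos[OF \<alpha>_pos T_pos] by (intro prob_space_PiM) auto
    then show "prob_space Dir"
      unfolding Dir_def dirichlet_eq by (rule prob_space.prob_space_distr) (rule normw_meas)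
  qed
  interpret FT: prob_space FT unfolding FT_def using F_prob by (intro prob_space_PiM) auto
  interpret Mn: pair_prob_space Dir FT by unfold_locales
  interpret Data: prob_space Data unfolding Data_def using P0_prob by (intro prob_space_PiM) auto
  interpret DM: pair_sigma_finite Data Mn
    by (intro pair_sigma_finite.intro Data.sigma_finite_measure_axioms) (simp add: Mn_def Mn.P.sigma_finite_measure_axioms)
  have setsDir: "sets Dir = sets (PiM {..<N} (\<lambda>_. borel))" by (simp add: Dir_def dirichlet_def)
  have spMn: "space Mn = space Dir \<times> space FT" by (simp add: Mn_def space_pair_measure)
  have wDir: "(\<lambda>w. w a) \<in> borel_measurable Dir" if "a < N" for a
  proof -
    have "(\<lambda>w. w a) \<in> borel_measurable (PiM {..<N} (\<lambda>_. borel))"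
      using that by (intro measurable_component_singleton) auto
    then show ?thesis using measurable_cong_sets[OF setsDir refl] by blast
  qed
  have xFT: "(\<lambda>xt. xt i) \<in> measurable FT X" if "i < T" for i
  proof -
    have "(\<lambda>xt. xt i) \<in> measurable FT F"
      unfolding FT_def using that by (intro measurable_component_singleton) auto
    then show ?thesis using measurable_cong_sets[OF refl F_prob(2)] by blast
  qed
  have xData: "(\<lambda>x. x i) \<in> measurable Data X" if "i < n" for i
  proof -
    have "(\<lambda>x. x i) \<in> measurable Data P0"
      unfolding Data_def using that by (intro measurable_component_singleton) auto
    then show ?thesis using measurable_cong_sets[OF refl P0_prob(2)] by blast
  qed
  have yj: "(\<lambda>z. ymap n (fst z) (snd (snd z)) a) \<in> measurable (Data \<Otimes>\<^sub>M Mn) X" if "a < N" for a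
  proof (cases "a < n")
    case True
    have "(\<lambda>z. fst z a) \<in> measurable (Data \<Otimes>\<^sub>M Mn) X"
      using measurable_compose[OF measurable_fst xData[OF True], of Mn] by simp
    then show ?thesis using True by (simp add: ymap_def)
  next
    case False
    then have i: "a - n < T" using that by (auto simp: N_def)
    have "(\<lambda>z. snd (snd z)) \<in> measurable (Data \<Otimes>\<^sub>M Mn) FT"
      unfolding Mn_def by (rule measurable_compose[OF measurable_snd measurable_snd])
    from measurable_compose[OF this xFT[OF i]]
    have "(\<lambda>z. snd (snd z) (a - n)) \<in> measurable (Data \<Otimes>\<^sub>M Mn) X" .
    then show ?thesis using False by (simp add: ymap_def)
  qed
  have wj: "(\<lambda>z. fst (snd z) a) \<in> borel_measurable (Data \<Otimes>\<^sub>M Mn)" if "a < N" for a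
  proof -
    have "(\<lambda>z. fst (snd z)) \<in> measurable (Data \<Otimes>\<^sub>M Mn) Dir"
      unfolding Mn_def by (rule measurable_compose[OF measurable_snd measurable_fst])
    from measurable_compose[OF this wDir[OF that]] show ?thesis .
  qed
  have Kj: "(\<lambda>z. Khat k P0 (ymap n (fst z) (snd (snd z)) a) (ymap n (fst z) (snd (snd z)) b)) \<in> borel_measurable (Data \<Otimes>\<^sub>M Mn)"
    if "a < N" "b < N" for a b
  proof -
    have "(\<lambda>z. (ymap n (fst z) (snd (snd z)) a, ymap n (fst z) (snd (snd z)) b)) \<in> measurable (Data \<Otimes>\<^sub>M Mn) (X \<Otimes>\<^sub>M X)"
      using yj[OF that(1)] yj[OF that(2)] by (rule measurable_Pair)
    from measurable_compose[OF this Khat_meas[OF kernel k_meas k_bdd P0_prob refl refl]] show ?thesis by simp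
  qed
  have Dj: "(\<lambda>z. D (fst z) (snd z)) \<in> borel_measurable (Data \<Otimes>\<^sub>M Mn)"
    unfolding D_def Dq_def using wj Kj
    by (intro borel_measurable_sum borel_measurable_times) auto
  have Dx: "(\<lambda>\<omega>. D x \<omega>) \<in> borel_measurable Mn" if "x \<in> space Data" for x
    using measurable_Pair2[OF Dj that] by simp
  have AEgood: "AE \<omega> in Mn. good \<omega>"
  proof -
    have d: "AE w in Dir. (\<forall>a<N. 0 \<le> w a) \<and> (\<Sum>a<N. w a) = 1"
      unfolding Dir_def N_def by (rule dirichlet_AE[OF n T_pos \<alpha>_pos])
    have "AE w in distr Mn Dir fst. (\<forall>a<N. 0 \<le> w a) \<and> (\<Sum>a<N. w a) = 1"
      unfolding Mn_def FT.distr_pair_fst using d .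
    from AE_distrD[OF _ this] show ?thesis unfolding good_def Mn_def by simp
  qed
  have xs: "\<And>i. i < n \<Longrightarrow> x i \<in> space X" if "x \<in> space Data" for x
    using that spP0 by (auto simp: Data_def space_PiM PiE_iff)
  have xts: "\<And>i. i < T \<Longrightarrow> snd \<omega> i \<in> space X" if "\<omega> \<in> space Mn" for \<omega>
    using that spF by (auto simp: spMn FT_def space_PiM PiE_iff)
  have yR: "\<And>a. a < N \<Longrightarrow> ymap n x (snd \<omega>) a \<in> space X" if "x \<in> space Data" "\<omega> \<in> space Mn" for x \<omega>
    using xs[OF that(1)] xts[OF that(2)] by (auto simp: ymap_def N_def)
  have Rfacts: "random_measure X n T x \<omega> = rmeas X N (fst \<omega>) (ymap n x (snd \<omega>))
      \<and> prob_space (rmeas X N (fst \<omega>) (ymap n x (snd \<omega>)))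
      \<and> sets (rmeas X N (fst \<omega>) (ymap n x (snd \<omega>))) = sets X
      \<and> MMD2 k (rmeas X N (fst \<omega>) (ymap n x (snd \<omega>))) P0 = D x \<omega>"
    if x: "x \<in> space Data" and om: "\<omega> \<in> space Mn" and g: "good \<omega>" for x \<omega>
  proof (intro conjI)
    show "random_measure X n T x \<omega> = rmeas X N (fst \<omega>) (ymap n x (snd \<omega>))"
      unfolding N_def using random_measure_eq[where n=n and T=T and x=x and xt="snd \<omega>" and w="fst \<omega>" and X=X, OF xs[OF x] xts[OF om]] by simp
    show "prob_space (rmeas X N (fst \<omega>) (ymap n x (snd \<omega>)))"
      using yR[OF x om] g by (intro prob_space_rmeas) (auto simp: good_def)
    show "sets (rmeas X N (fst \<omega>) (ymap n x (snd \<omega>))) = sets X" by (rule rmeas_sets)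
    show "MMD2 k (rmeas X N (fst \<omega>) (ymap n x (snd \<omega>))) P0 = D x \<omega>"
      unfolding D_def using yR[OF x om] g by (intro MMD2_rmeas[OF kernel k_meas k_bdd P0_prob]) (auto simp: good_def)
  qed
  define \<Phi> where "\<Phi> = (\<lambda>x. \<integral>\<^sup>+\<omega>. ennreal (D x \<omega>) \<partial>Mn)"
  have pw: "emeasure (approx_posterior X F \<alpha> T n x) S \<le> min 1 (ennreal (1/s) * \<Phi> x)" if x: "x \<in> space Data" for x
  proof -
    let ?f = "random_measure X n T x"
    have apx: "approx_posterior X F \<alpha> T n x = distr Mn (subprob_algebra X) ?f"
      by (simp add: approx_posterior_def Mn_def Dir_def FT_def N_def)
    have e1: "emeasure (approx_posterior X F \<alpha> T n x) S \<le> emeasure Mn (?f -` S \<inter> space Mn)"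
      unfolding apx by (rule emeasure_distr_le)
    have sub: "AE \<omega> in Mn. \<omega> \<in> ?f -` S \<inter> space Mn \<longrightarrow> \<omega> \<in> {\<omega> \<in> space Mn. s \<le> D x \<omega>}"
      using AEgood
    proof eventually_elim
      case (elim \<omega>)
      show ?case
      proof
        assume om: "\<omega> \<in> ?f -` S \<inter> space Mn"
        then have oms: "\<omega> \<in> space Mn" by simp
        define R where "R = rmeas X N (fst \<omega>) (ymap n x (snd \<omega>))"
        note RF = Rfacts[OF x oms elim, folded R_def]
        have tb: "MMD k (P\<theta> (thetastar R)) P0 \<le> C + 2 * MMD k R P0"
          using RF by (intro thetastar_bound[OF kernel k_meas k_bdd P\<theta>_prob P0_prob C_def thetastar_min]) auto
        have "R \<in> S" using om RF by simp
        then have "C + m / sqrt (real n) < MMD k (P\<theta> (thetastar R)) P0" by (simp add: S_def)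
        with tb have lt: "m / (2 * sqrt (real n)) < sqrt (MMD2 k R P0)" by (simp add: MMD_def field_simps)
        have l0: "0 \<le> m / (2 * sqrt (real n))" using m by simp
        then have "0 < sqrt (MMD2 k R P0)" using lt by linarith
        then have v0: "0 \<le> MMD2 k R P0" using real_sqrt_gt_0_iff by fastforce
        have "(m / (2 * sqrt (real n)))\<^sup>2 < (sqrt (MMD2 k R P0))\<^sup>2"
          using lt l0 by (intro power_strict_mono) auto
        also have "\<dots> = MMD2 k R P0" using v0 by simp
        finally have "(m / (2 * sqrt (real n)))\<^sup>2 < D x \<omega>" using RF by simp
        moreover have "(m / (2 * sqrt (real n)))\<^sup>2 = s"
          unfolding s_def using n by (simp add: power_divide power_mult_distrib)
        ultimately show "\<omega> \<in> {\<omega> \<in> space Mn. s \<le> D x \<omega>}" using oms by simp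
      qed
    qed
    have e2: "emeasure Mn (?f -` S \<inter> space Mn) \<le> emeasure Mn {\<omega> \<in> space Mn. s \<le> D x \<omega>}"
      using sub by (rule emeasure_mono_AE) (use Dx[OF x] in measurable)
    have e3: "emeasure Mn {\<omega> \<in> space Mn. s \<le> D x \<omega>} \<le> ennreal (1/s) * \<Phi> x"
    proof -
      have "{\<omega> \<in> space Mn. s \<le> D x \<omega>} \<subseteq> {\<omega> \<in> space Mn. 1 \<le> ennreal (1/s) * ennreal (D x \<omega>)}"
      proof safe
        fix \<omega> assume "\<omega> \<in> space Mn" "s \<le> D x \<omega>"
        then have "1 \<le> D x \<omega> / s" using s_pos by simp
        then have "ennreal 1 \<le> ennreal (1/s * D x \<omega>)" by (intro ennreal_leI) simp
        also have "\<dots> = ennreal (1/s) * ennreal (D x \<omega>)"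
          using s_pos \<open>s \<le> D x \<omega>\<close> by (intro ennreal_mult) auto
        finally show "1 \<le> ennreal (1/s) * ennreal (D x \<omega>)" by simp
      qed
      then have "emeasure Mn {\<omega> \<in> space Mn. s \<le> D x \<omega>} \<le> emeasure Mn {\<omega> \<in> space Mn. 1 \<le> ennreal (1/s) * ennreal (D x \<omega>)}"
        by (intro emeasure_mono) (use Dx[OF x] in measurable)
      also have "\<dots> \<le> ennreal (1/s) * (\<integral>\<^sup>+\<omega>. ennreal (D x \<omega>) * indicator (space Mn) \<omega> \<partial>Mn)"
        by (rule nn_integral_Markov_inequality) (use Dx[OF x] in measurable)
      also have "(\<integral>\<^sup>+\<omega>. ennreal (D x \<omega>) * indicator (space Mn) \<omega> \<partial>Mn) = \<Phi> x"
        unfolding \<Phi>_def by (intro nn_integral_cong) simp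
      finally show ?thesis .
    qed
    have e4: "emeasure Mn (?f -` S \<inter> space Mn) \<le> 1"
      using Mn.P.emeasure_space_1 emeasure_mono[of "?f -` S \<inter> space Mn" "space Mn" Mn]
      unfolding Mn_def by auto
    show ?thesis using order_trans[OF e1 e4] order_trans[OF e1 order_trans[OF e2 e3]] by simp
  qed
  define H where "H = (\<lambda>x. min 1 (ennreal (1/s) * \<Phi> x))"
  have Dce: "(\<lambda>(x, \<omega>). ennreal (D x \<omega>)) \<in> borel_measurable (Data \<Otimes>\<^sub>M Mn)"
  proof -
    have "(\<lambda>z. ennreal (D (fst z) (snd z))) \<in> borel_measurable (Data \<Otimes>\<^sub>M Mn)" using Dj by simp
    then show ?thesis by (simp add: case_prod_beta')
  qed
  have \<Phi>m: "\<Phi> \<in> borel_measurable Data"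
    unfolding \<Phi>_def using Dce by (rule DM.M2.borel_measurable_nn_integral)
  have Hm: "H \<in> borel_measurable Data" unfolding H_def using \<Phi>m by measurable
  have Hle: "H x \<le> 1" for x unfolding H_def by simp
  have Hfin: "H x < \<top>" for x using Hle[of x] by (simp add: le_less_trans)
  have int: "integrable Data (\<lambda>x. enn2real (H x))"
  proof (rule Data.integrable_const_bound[where B=1])
    show "AE x in Data. norm (enn2real (H x)) \<le> 1"
      using Hle by (auto intro!: enn2real_leI)
    show "(\<lambda>x. enn2real (H x)) \<in> borel_measurable Data" using Hm by measurable
  qed
  have step1: "(\<integral>x. measure (approx_posterior X F \<alpha> T n x) S \<partial>Data) \<le> (\<integral>x. enn2real (H x) \<partial>Data)"
  proof (rule integral_mono_AE'[OF int])
    show "AE x in Data. measure (approx_posterior X F \<alpha> T n x) S \<le> enn2real (H x)"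
    proof (rule AE_I2)
      fix x assume x: "x \<in> space Data"
      show "measure (approx_posterior X F \<alpha> T n x) S \<le> enn2real (H x)"
        unfolding measure_def H_def using pw[OF x] Hfin[of x] unfolding H_def by (intro enn2real_mono) auto
    qed
  qed simp
  have step2: "(\<integral>x. enn2real (H x) \<partial>Data) = enn2real (\<integral>\<^sup>+x. H x \<partial>Data)"
  proof -
    have "(\<integral>x. enn2real (H x) \<partial>Data) = enn2real (\<integral>\<^sup>+x. ennreal (enn2real (H x)) \<partial>Data)"
      by (rule integral_eq_nn_integral) (use Hm in auto)
    also have "(\<integral>\<^sup>+x. ennreal (enn2real (H x)) \<partial>Data) = (\<integral>\<^sup>+x. H x \<partial>Data)"
      using Hfin by (intro nn_integral_cong) simp
    finally show ?thesis .
  qed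
  have step3: "(\<integral>\<^sup>+x. H x \<partial>Data) \<le> ennreal (1/s) * (\<integral>\<^sup>+x. \<Phi> x \<partial>Data)"
  proof -
    have "(\<integral>\<^sup>+x. H x \<partial>Data) \<le> (\<integral>\<^sup>+x. ennreal (1/s) * \<Phi> x \<partial>Data)"
      unfolding H_def by (intro nn_integral_mono) simp
    also have "\<dots> = ennreal (1/s) * (\<integral>\<^sup>+x. \<Phi> x \<partial>Data)"
      using \<Phi>m by (rule nn_integral_cmult)
    finally show ?thesis .
  qed
  have step4: "(\<integral>\<^sup>+x. \<Phi> x \<partial>Data) = (\<integral>\<^sup>+\<omega>. (\<integral>\<^sup>+x. ennreal (D x \<omega>) \<partial>Data) \<partial>Mn)"
    unfolding \<Phi>_def using Dce by (rule DM.Fubini'[symmetric])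
  have Bwm: "(\<lambda>w. ennreal (Bw n T w)) \<in> borel_measurable Dir"
  proof -
    have "(\<lambda>w. Bw n T w) \<in> borel_measurable Dir"
      unfolding Bw_def using wDir
      by (intro borel_measurable_add borel_measurable_times borel_measurable_power borel_measurable_sum borel_measurable_const) (auto simp: N_def)
    then show ?thesis by simp
  qed
  have step5: "(\<integral>\<^sup>+\<omega>. (\<integral>\<^sup>+x. ennreal (D x \<omega>) \<partial>Data) \<partial>Mn) \<le> (\<integral>\<^sup>+\<omega>. ennreal (Bw n T (fst \<omega>)) \<partial>Mn)"
  proof (rule nn_integral_mono_AE)
    show "AE \<omega> in Mn. (\<integral>\<^sup>+x. ennreal (D x \<omega>) \<partial>Data) \<le> ennreal (Bw n T (fst \<omega>))"
      using AEgood AE_space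
    proof eventually_elim
      case (elim \<omega>)
      then have g: "good \<omega>" and om: "\<omega> \<in> space Mn" by auto
      have w0: "\<And>a. a < n + T \<Longrightarrow> 0 \<le> fst \<omega> a" using g by (auto simp: good_def N_def)
      have Dm: "(\<lambda>x. D x \<omega>) \<in> borel_measurable Data" using measurable_Pair1[OF Dj om] by simp
      define B0 where "B0 = (\<Sum>a<N. \<Sum>b<N. \<bar>fst \<omega> a * fst \<omega> b\<bar> * 4)"
      have Dbd: "\<bar>D x \<omega>\<bar> \<le> B0" if x: "x \<in> space Data" for x
      proof -
        have "\<bar>D x \<omega>\<bar> \<le> (\<Sum>a<N. \<bar>\<Sum>b<N. fst \<omega> a * fst \<omega> b * Khat k P0 (ymap n x (snd \<omega>) a) (ymap n x (snd \<omega>) b)\<bar>)"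
          unfolding D_def Dq_def by (rule sum_abs)
        also have "\<dots> \<le> (\<Sum>a<N. \<Sum>b<N. \<bar>fst \<omega> a * fst \<omega> b * Khat k P0 (ymap n x (snd \<omega>) a) (ymap n x (snd \<omega>) b)\<bar>)"
          by (intro sum_mono sum_abs)
        also have "\<dots> \<le> B0" unfolding B0_def
        proof (intro sum_mono)
          fix a b assume a: "a \<in> {..<N}" and b: "b \<in> {..<N}"
          have "\<bar>Khat k P0 (ymap n x (snd \<omega>) a) (ymap n x (snd \<omega>) b)\<bar> \<le> 4"
            using yR[OF x om] a b by (intro Khat_bdd[OF kernel k_meas k_bdd P0_prob]) auto
          then show "\<bar>fst \<omega> a * fst \<omega> b * Khat k P0 (ymap n x (snd \<omega>) a) (ymap n x (snd \<omega>) b)\<bar> \<le> \<bar>fst \<omega> a * fst \<omega> b\<bar> * 4"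
            by (simp add: abs_mult mult_left_mono)
        qed
        finally show ?thesis .
      qed
      have intD: "integrable Data (\<lambda>x. D x \<omega>)"
        using Dbd Dm by (intro Data.integrable_const_bound[where B=B0]) auto
      have nnD: "AE x in Data. 0 \<le> D x \<omega>"
      proof (rule AE_I2)
        fix x assume x: "x \<in> space Data"
        note RF = Rfacts[OF x om g]
        have "0 \<le> MMD2 k (rmeas X N (fst \<omega>) (ymap n x (snd \<omega>))) P0"
          using RF by (intro MMD2_nonneg[OF kernel k_meas k_bdd _ _ P0_prob]) auto
        then show "0 \<le> D x \<omega>" using RF by simp
      qed
      have "(\<integral>\<^sup>+x. ennreal (D x \<omega>) \<partial>Data) = ennreal (\<integral>x. D x \<omega> \<partial>Data)"
        by (rule nn_integral_eq_integral[OF intD nnD])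
      also have "(\<integral>x. D x \<omega> \<partial>Data) \<le> Bw n T (fst \<omega>)"
        unfolding D_def Data_def N_def Bw_def
        by (rule data_exp[OF kernel k_meas k_bdd P0_prob w0 xts[OF om]])
      then have "ennreal (\<integral>x. D x \<omega> \<partial>Data) \<le> ennreal (Bw n T (fst \<omega>))" by (rule ennreal_leI)
      finally show ?case .
    qed
  qed
  have step6: "(\<integral>\<^sup>+\<omega>. ennreal (Bw n T (fst \<omega>)) \<partial>Mn) = (\<integral>\<^sup>+w. ennreal (Bw n T w) \<partial>Dir)"
  proof -
    have "(\<integral>\<^sup>+w. ennreal (Bw n T w) \<partial>Dir) = (\<integral>\<^sup>+w. ennreal (Bw n T w) \<partial>distr Mn Dir fst)"
      by (simp add: Mn_def FT.distr_pair_fst)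
    also have "\<dots> = (\<integral>\<^sup>+\<omega>. ennreal (Bw n T (fst \<omega>)) \<partial>Mn)"
      using Bwm by (subst nn_integral_distr) (auto simp: Mn_def)
    finally show ?thesis by simp
  qed
  have step7: "(\<integral>\<^sup>+w. ennreal (Bw n T w) \<partial>Dir) \<le> ennreal ((72 + 8 * \<alpha>) / real n)"
    unfolding Dir_def N_def by (rule dirichlet_bound[OF n T_pos \<alpha>_pos])
  have "(\<integral>\<^sup>+x. H x \<partial>Data) \<le> ennreal (1/s) * ennreal ((72 + 8 * \<alpha>) / real n)"
    using step3 step4 step5 step6 step7
    by (metis (no_types, lifting) order_trans mult_left_mono zero_le)
  also have "\<dots> = ennreal (4 * (72 + 8 * \<alpha>) / m\<^sup>2)"
  proof -
    have "1/s * ((72 + 8 * \<alpha>) / real n) = 4 * (72 + 8 * \<alpha>) / m\<^sup>2"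
      using n m by (simp add: s_def field_simps)
    moreover have "ennreal (1/s) * ennreal ((72 + 8 * \<alpha>) / real n) = ennreal (1/s * ((72 + 8 * \<alpha>) / real n))"
      using s_pos \<alpha>_pos by (intro ennreal_mult[symmetric]) auto
    ultimately show ?thesis by simp
  qed
  finally have "enn2real (\<integral>\<^sup>+x. H x \<partial>Data) \<le> 4 * (72 + 8 * \<alpha>) / m\<^sup>2"
    using \<alpha>_pos by (intro enn2real_leI) auto
  with step1 step2 show ?thesis unfolding S_def Data_def by simp
qed

theorem theorem2:
  fixes X :: "'a measure" and k :: "'a \<Rightarrow> 'a \<Rightarrow> real"
    and \<Theta> :: "'p set" and P\<theta> :: "'p \<Rightarrow> 'a measure"
    and P0 F :: "'a measure" and C \<alpha> :: real and T :: nat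
    and thetastar :: "'a measure \<Rightarrow> 'p" and M :: "nat \<Rightarrow> real"
  assumes kernel: "reproducing_kernel X k"
    and k_meas: "(\<lambda>(x, y). k x y) \<in> borel_measurable (X \<Otimes>\<^sub>M X)"
    and k_bdd: "\<forall>x\<in>space X. \<forall>y\<in>space X. \<bar>k x y\<bar> \<le> 1"
    and P\<theta>_prob: "\<forall>\<theta>\<in>\<Theta>. prob_space (P\<theta> \<theta>) \<and> sets (P\<theta> \<theta>) = sets X"
    and P0_prob: "prob_space P0" "sets P0 = sets X"
    and C_def: "(INF \<theta>\<in>\<Theta>. MMD k (P\<theta> \<theta>) P0) = C" and C_pos: "C > 0"
    and \<alpha>_pos: "\<alpha> > 0" and T_pos: "T \<ge> 1"
    and F_prob: "prob_space F" "sets F = sets X"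
    and thetastar_min: "\<forall>P. prob_space P \<and> sets P = sets X \<longrightarrow>
          thetastar P \<in> \<Theta> \<and> (\<forall>\<theta>\<in>\<Theta>. MMD2 k P (P\<theta> (thetastar P)) \<le> MMD2 k P (P\<theta> \<theta>))"
    and thetastar_meas: "(\<lambda>P. MMD k (P\<theta> (thetastar P)) P0) \<in> borel_measurable (subprob_algebra X)"
    and M_pos: "\<forall>n. M n > 0"
    and M_lim: "filterlim M at_top sequentially"
  shows "(\<lambda>n. \<integral>x. measure (approx_posterior X F \<alpha> T n x)
                 {P \<in> space (subprob_algebra X). MMD k (P\<theta> (thetastar P)) P0 > C + M n / sqrt (real n)}
              \<partial>(PiM {..<n} (\<lambda>_. P0)))
         \<longlonglongrightarrow> 0"
proof -
  define c where "c = 4 * (72 + 8 * \<alpha>)"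
  let ?a = "\<lambda>n. \<integral>x. measure (approx_posterior X F \<alpha> T n x)
                 {P \<in> space (subprob_algebra X). MMD k (P\<theta> (thetastar P)) P0 > C + M n / sqrt (real n)}
              \<partial>(PiM {..<n} (\<lambda>_. P0))"
  have bnd: "?a n \<le> c / (M n)\<^sup>2" if "1 \<le> n" for n
    unfolding c_def
    by (rule main_bound[OF kernel k_meas k_bdd P\<theta>_prob P0_prob C_def \<alpha>_pos T_pos F_prob thetastar_min that]) (use M_pos in auto)
  have nn: "0 \<le> ?a n" for n
    by (rule Bochner_Integration.integral_nonneg) simp
  have lim: "(\<lambda>n. c / (M n)\<^sup>2) \<longlonglongrightarrow> 0"
  proof (rule tendsto_divide_0[OF tendsto_const])
    have "filterlim (\<lambda>n. (M n) ^ 2) at_top sequentially"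
      by (rule filterlim_pow_at_top[OF _ M_lim]) simp
    then show "filterlim (\<lambda>n. (M n)\<^sup>2) at_infinity sequentially"
      by (rule filterlim_at_top_imp_at_infinity)
  qed
  show ?thesis
  proof (rule tendsto_sandwich[OF _ _ tendsto_const lim])
    show "\<forall>\<^sub>F n in sequentially. 0 \<le> ?a n" using nn by simp
    show "\<forall>\<^sub>F n in sequentially. ?a n \<le> c / (M n)\<^sup>2"
      using bnd by (intro eventually_sequentiallyI[of 1]) auto
  qed
qed


end
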